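(* Let $N\ge1$, let $F:\mathbb R\to\mathbb R$ be a continuous even function, and $J(u)=\int_{\mathbb R^N}\frac12|\nabla u|^2+F(u)\,dx$ for $u\in H^1(\mathbb R^N)$. Suppose that for every $\rho>0$ the minimum $I_{\rho^2}:=\min\{J(u):u\in H^1(\mathbb R^N),\ \|u\|_{L^2}^2=\rho^2\}$ exists (is attained). Then for every $\rho>0$ and every $\mu\in(0,\rho)$, $$I_{\rho^2}<I_{\mu^2}+I_{\rho^2-\mu^2}.$$
   Context: Here $I_{\rho^2-\mu^2}$ denotes the minimum of $J$ over functions with squared $L^2$-norm equal to $\rho^2-\mu^2$. *)

theory Defs
  imports "HOL-Analysis.Analysis"
begin

text \<open>Functions on R^N are modelled as functions on an arbitrary Euclidean space 'a,
  with N = DIM('a) (always at least 1), integrated against Lebesgue measure.\<close>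

fun iter_deriv :: "'a::euclidean_space list \<Rightarrow> ('a \<Rightarrow> real) \<Rightarrow> ('a \<Rightarrow> real)" where
  "iter_deriv [] f = f"
| "iter_deriv (d # ds) f = (\<lambda>x. frechet_derivative (iter_deriv ds f) (at x) d)"

definition smooth_fun :: "('a::euclidean_space \<Rightarrow> real) \<Rightarrow> bool" where
  "smooth_fun f \<longleftrightarrow> (\<forall>ds x. iter_deriv ds f differentiable (at x))"

definition test_fun :: "('a::euclidean_space \<Rightarrow> real) \<Rightarrow> bool" where
  "test_fun \<phi> \<longleftrightarrow> smooth_fun \<phi> \<and> compact (closure {x. \<phi> x \<noteq> 0})"

definition L2 :: "('a::euclidean_space \<Rightarrow> real) \<Rightarrow> bool" where
  "L2 f \<longleftrightarrow> f \<in> borel_measurable lebesgue \<and> integrable lebesgue (\<lambda>x. (f x)\<^sup>2)"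

definition weak_partial :: "('a::euclidean_space \<Rightarrow> real) \<Rightarrow> 'a \<Rightarrow> ('a \<Rightarrow> real) \<Rightarrow> bool" where
  "weak_partial u b g \<longleftrightarrow>
     (\<forall>\<phi>. test_fun \<phi> \<longrightarrow>
        (\<integral>x. u x * frechet_derivative \<phi> (at x) b \<partial>lebesgue) = - (\<integral>x. g x * \<phi> x \<partial>lebesgue))"

definition H1 :: "('a::euclidean_space \<Rightarrow> real) \<Rightarrow> bool" where
  "H1 u \<longleftrightarrow> L2 u \<and> (\<forall>b\<in>Basis. \<exists>g. L2 g \<and> weak_partial u b g)"

definition weak_grad :: "('a::euclidean_space \<Rightarrow> real) \<Rightarrow> 'a \<Rightarrow> ('a \<Rightarrow> real)" where
  "weak_grad u b = (SOME g. L2 g \<and> weak_partial u b g)"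

definition grad_sq :: "('a::euclidean_space \<Rightarrow> real) \<Rightarrow> 'a \<Rightarrow> real" where
  "grad_sq u x = (\<Sum>b\<in>Basis. (weak_grad u b x)\<^sup>2)"

definition L2_norm_sq :: "('a::euclidean_space \<Rightarrow> real) \<Rightarrow> real" where
  "L2_norm_sq u = (\<integral>x. (u x)\<^sup>2 \<partial>lebesgue)"

definition J :: "(real \<Rightarrow> real) \<Rightarrow> ('a::euclidean_space \<Rightarrow> real) \<Rightarrow> real" where
  "J F u = (\<integral>x. (1/2) * grad_sq u x + F (u x) \<partial>lebesgue)"

definition mass_set :: "real \<Rightarrow> ('a::euclidean_space \<Rightarrow> real) set" where
  "mass_set m = {u. H1 u \<and> L2_norm_sq u = m}"

definition Imin :: "(real \<Rightarrow> real) \<Rightarrow> real \<Rightarrow> ('a::euclidean_space) itself \<Rightarrow> real" where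
  "Imin F m _ = Inf ((J F :: ('a \<Rightarrow> real) \<Rightarrow> real) ` mass_set m)"

end

theory Submission
  imports Defs "HOL-Computational_Algebra.Polynomial"
begin

definition fb :: "real \<Rightarrow> real" where "fb y = (if y > 0 then exp (- inverse y) else 0)"

fun pk :: "nat \<Rightarrow> real poly" where
  "pk 0 = 1"
| "pk (Suc k) = [:0,0,1:] * (pk k - pderiv (pk k))"

definition Dk :: "nat \<Rightarrow> real \<Rightarrow> real" where
  "Dk k y = (if y > 0 then poly (pk k) (inverse y) * exp (- inverse y) else 0)"

lemma poly_exp_tendsto: "((\<lambda>z. poly q z * exp (- z)) \<longlongrightarrow> (0::real)) at_top"
proof -
  have "((\<lambda>z. \<Sum>i\<le>degree q. coeff q i * (z ^ i / exp z)) \<longlongrightarrow> (\<Sum>i\<le>degree q. coeff q i * 0)) at_top"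
    by (intro tendsto_sum tendsto_mult tendsto_const tendsto_power_div_exp_0)
  moreover have "poly q z * exp (- z) = (\<Sum>i\<le>degree q. coeff q i * (z ^ i / exp z))" for z
    by (simp add: poly_altdef sum_distrib_right exp_minus divide_inverse mult.assoc)
  ultimately show ?thesis by simp
qed

lemma Dk_deriv_pos:
  assumes "y > 0"
  shows "(Dk k has_real_derivative Dk (Suc k) y) (at y)"
proof -
  let ?g = "\<lambda>y. poly (pk k) (inverse y) * exp (- inverse y)"
  have "(?g has_real_derivative
      (poly (pderiv (pk k)) (inverse y) * (- (inverse y ^ 2)) * exp (- inverse y)
       + poly (pk k) (inverse y) * (exp (- inverse y) * (inverse y ^ 2)))) (at y)"
    using assms
    by (auto intro!: derivative_eq_intros DERIV_chain2[OF poly_DERIV] simp: power2_eq_square)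
  moreover have "poly (pderiv (pk k)) (inverse y) * (- (inverse y ^ 2)) * exp (- inverse y)
       + poly (pk k) (inverse y) * (exp (- inverse y) * (inverse y ^ 2)) = Dk (Suc k) y"
    using assms by (simp add: Dk_def algebra_simps power2_eq_square)
  ultimately have "(?g has_real_derivative Dk (Suc k) y) (at y)" by simp
  then show ?thesis
    apply (rule has_field_derivative_transform_within_open[where S="{0<..}"])
    using assms by (auto simp: Dk_def)
qed

lemma Dk_deriv_neg:
  assumes "y < 0"
  shows "(Dk k has_real_derivative Dk (Suc k) y) (at y)"
proof -
  have "((\<lambda>_. 0::real) has_real_derivative Dk (Suc k) y) (at y)" using assms by (simp add: Dk_def)
  then show ?thesis
    apply (rule has_field_derivative_transform_within_open[where S="{..<0}"])
    using assms by (auto simp: Dk_def)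
qed

lemma Dk_deriv_0: "(Dk k has_real_derivative Dk (Suc k) 0) (at 0)"
proof -
  have "((\<lambda>h. (Dk k (0 + h) - Dk k 0) / h) \<longlongrightarrow> 0) (at (0::real))"
  proof (rule filterlim_split_at)
    show "((\<lambda>h. (Dk k (0 + h) - Dk k 0) / h) \<longlongrightarrow> 0) (at_left (0::real))"
    proof (rule Lim_transform_eventually[OF tendsto_const])
      show "\<forall>\<^sub>F x in at_left 0. 0 = (Dk k (0 + x) - Dk k 0) / (x::real)"
        using eventually_at_left_real[of "-1::real" 0] by (auto elim!: eventually_mono simp: Dk_def)
    qed
  next
    have "((\<lambda>z. poly ([:0,1:] * pk k) z * exp (- z)) \<longlongrightarrow> (0::real)) at_top"
      by (rule poly_exp_tendsto)
    then have "((\<lambda>z. (Dk k (0 + inverse z) - Dk k 0) / inverse z) \<longlongrightarrow> (0::real)) at_top"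
      apply (rule Lim_transform_eventually)
      using eventually_gt_at_top[of 0]
      by eventually_elim (simp add: Dk_def field_simps)
    then show "((\<lambda>h. (Dk k (0 + h) - Dk k 0) / h) \<longlongrightarrow> 0) (at_right (0::real))"
      unfolding filterlim_at_top_to_right by simp
  qed
  then show ?thesis unfolding DERIV_def by (simp add: Dk_def)
qed

lemma Dk_deriv: "(Dk k has_real_derivative Dk (Suc k) y) (at y)"
  using Dk_deriv_pos Dk_deriv_neg Dk_deriv_0 by (cases "y > 0"; cases "y < 0") auto

lemma Dk0: "Dk 0 = fb" by (auto simp: Dk_def fb_def fun_eq_iff)

definition sm1 :: "(real \<Rightarrow> real) \<Rightarrow> bool" where
  "sm1 g \<longleftrightarrow> (\<exists>S. g \<in> S \<and> (\<forall>h\<in>S. \<exists>h'\<in>S. \<forall>x. (h has_real_derivative h' x) (at x)))"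

lemma sm1_by_set:
  assumes "g \<in> S" "\<And>h. h \<in> S \<Longrightarrow> \<exists>h'\<in>S. \<forall>x. (h has_real_derivative h' x) (at x)"
  shows "sm1 g"
  using assms unfolding sm1_def by blast

lemma sm1_D:
  assumes "sm1 g"
  shows "\<exists>g'. sm1 g' \<and> (\<forall>x. (g has_real_derivative g' x) (at x))"
  using assms unfolding sm1_def by metis

lemma sm1_I:
  assumes "\<And>x. (g has_real_derivative g' x) (at x)" "sm1 g'"
  shows "sm1 g"
proof -
  obtain S where S: "g' \<in> S" "\<forall>h\<in>S. \<exists>h'\<in>S. \<forall>x. (h has_real_derivative h' x) (at x)"
    using assms(2) unfolding sm1_def by blast
  show ?thesis
    by (rule sm1_by_set[of g "insert g S"]) (use S assms(1) in auto)
qed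

lemma sm1_deriv:
  assumes "sm1 g"
  shows "sm1 (deriv g)" "(g has_real_derivative deriv g x) (at x)"
proof -
  obtain g' where g': "sm1 g'" "\<And>x. (g has_real_derivative g' x) (at x)"
    using sm1_D[OF assms] by blast
  then have "deriv g = g'" by (auto simp: fun_eq_iff intro: DERIV_imp_deriv)
  then show "sm1 (deriv g)" "(g has_real_derivative deriv g x) (at x)" using g' by auto
qed

lemma sm1_cont: "sm1 g \<Longrightarrow> continuous_on UNIV g"
  using sm1_deriv(2) by (meson DERIV_isCont continuous_at_imp_continuous_on)

lemma sm1_fb: "sm1 fb"
proof (rule sm1_by_set[of _ "range Dk"])
  show "fb \<in> range Dk" by (metis Dk0 rangeI)
  fix h assume "h \<in> range Dk"
  then obtain k where "h = Dk k" by blast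
  then show "\<exists>h'\<in>range Dk. \<forall>x. (h has_real_derivative h' x) (at x)"
    using Dk_deriv by blast
qed

lemma sm1_const: "sm1 (\<lambda>_. c)"
  by (rule sm1_by_set[of _ "{\<lambda>_. c, \<lambda>_. 0}"]) auto

lemma sm1_cmult:
  assumes "sm1 g" shows "sm1 (\<lambda>x. c * g x)"
proof (rule sm1_by_set[of _ "{(\<lambda>x. c * h x) | h. sm1 h}"])
  fix k assume "k \<in> {(\<lambda>x. c * h x) | h. sm1 h}"
  then obtain h where h: "k = (\<lambda>x. c * h x)" "sm1 h" by blast
  obtain h' where "sm1 h'" "\<And>x. (h has_real_derivative h' x) (at x)" using sm1_D[OF h(2)] by blast
  then show "\<exists>h'\<in>{(\<lambda>x. c * h x) | h. sm1 h}. \<forall>x. (k has_real_derivative h' x) (at x)"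
    using h by (intro bexI[of _ "\<lambda>x. c * h' x"]) (auto intro!: derivative_eq_intros)
qed (use assms in auto)

lemma sm1_add:
  assumes "sm1 g" "sm1 h" shows "sm1 (\<lambda>x. g x + h x)"
proof (rule sm1_by_set[of _ "{(\<lambda>x. a x + b x) | a b. sm1 a \<and> sm1 b}"])
  fix k assume "k \<in> {(\<lambda>x. a x + b x) | a b. sm1 a \<and> sm1 b}"
  then obtain a b where h: "k = (\<lambda>x. a x + b x)" "sm1 a" "sm1 b" by blast
  obtain a' where "sm1 a'" "\<And>x. (a has_real_derivative a' x) (at x)" using sm1_D[OF h(2)] by blast
  moreover obtain b' where "sm1 b'" "\<And>x. (b has_real_derivative b' x) (at x)" using sm1_D[OF h(3)] by blast
  ultimately show "\<exists>h'\<in>{(\<lambda>x. a x + b x) | a b. sm1 a \<and> sm1 b}. \<forall>x. (k has_real_derivative h' x) (at x)"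
    using h by (auto intro!: derivative_eq_intros)
qed (use assms in auto)

lemma sm1_diff:
  assumes "sm1 g" "sm1 h" shows "sm1 (\<lambda>x. g x - h x)"
  using sm1_add[OF assms(1) sm1_cmult[OF assms(2), of "-1"]] by simp

lemma sm1_mult:
  assumes "sm1 g" "sm1 h" shows "sm1 (\<lambda>x. g x * h x)"
proof -
  define S where "S = {(\<lambda>x. \<Sum>p\<leftarrow>L. fst p x * snd p x) | L. \<forall>p\<in>set L. sm1 (fst p) \<and> sm1 (snd p)}"
  have step: "\<exists>L'. (\<forall>p\<in>set L'. sm1 (fst p) \<and> sm1 (snd p)) \<and>
     (\<forall>x. ((\<lambda>x. \<Sum>p\<leftarrow>L. fst p x * snd p x) has_real_derivative (\<Sum>p\<leftarrow>L'. fst p x * snd p x)) (at x))"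
    if "\<forall>p\<in>set L. sm1 (fst p) \<and> sm1 (snd p)" for L
    using that
  proof (induction L)
    case Nil
    then show ?case by (intro exI[of _ "[]"]) auto
  next
    case (Cons p L)
    then obtain L' where L': "\<forall>p\<in>set L'. sm1 (fst p) \<and> sm1 (snd p)"
      "\<And>x. ((\<lambda>x. \<Sum>p\<leftarrow>L. fst p x * snd p x) has_real_derivative (\<Sum>p\<leftarrow>L'. fst p x * snd p x)) (at x)"
      by auto
    have p: "sm1 (fst p)" "sm1 (snd p)" using Cons.prems by auto
    show ?case
    proof (intro exI[of _ "(deriv (fst p), snd p) # (fst p, deriv (snd p)) # L'"] conjI allI)
      show "\<forall>q\<in>set ((deriv (fst p), snd p) # (fst p, deriv (snd p)) # L'). sm1 (fst q) \<and> sm1 (snd q)"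
        using L'(1) p sm1_deriv by auto
      fix x
      have "((\<lambda>x. fst p x * snd p x + (\<Sum>p\<leftarrow>L. fst p x * snd p x)) has_real_derivative
          (deriv (fst p) x * snd p x + fst p x * deriv (snd p) x + (\<Sum>p\<leftarrow>L'. fst p x * snd p x))) (at x)"
        using DERIV_add[OF DERIV_mult'[OF sm1_deriv(2)[OF p(1)] sm1_deriv(2)[OF p(2)]] L'(2)]
        by (simp add: algebra_simps)
      then show "((\<lambda>x. \<Sum>p\<leftarrow>p # L. fst p x * snd p x) has_real_derivative
          (\<Sum>q\<leftarrow>(deriv (fst p), snd p) # (fst p, deriv (snd p)) # L'. fst q x * snd q x)) (at x)"
        by (simp add: add.assoc)
    qed
  qed
  show ?thesis
  proof (rule sm1_by_set[of _ S])
    show "(\<lambda>x. g x * h x) \<in> S" unfolding S_def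
      by (intro CollectI exI[of _ "[(g,h)]"]) (use assms in auto)
  next
    fix k assume "k \<in> S"
    then obtain L where L: "k = (\<lambda>x. \<Sum>p\<leftarrow>L. fst p x * snd p x)" "\<forall>p\<in>set L. sm1 (fst p) \<and> sm1 (snd p)"
      unfolding S_def by blast
    from step[OF L(2)] obtain L' where "\<forall>p\<in>set L'. sm1 (fst p) \<and> sm1 (snd p)"
      "\<forall>x. ((\<lambda>x. \<Sum>p\<leftarrow>L. fst p x * snd p x) has_real_derivative (\<Sum>p\<leftarrow>L'. fst p x * snd p x)) (at x)"
      by blast
    then show "\<exists>h'\<in>S. \<forall>x. (k has_real_derivative h' x) (at x)"
      unfolding S_def L(1) by (intro bexI[of _ "\<lambda>x. \<Sum>p\<leftarrow>L'. fst p x * snd p x"]) auto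
  qed
qed

lemma sm1_affine:
  assumes "sm1 g" shows "sm1 (\<lambda>y. g (a * y + b))"
proof (rule sm1_by_set[of _ "{(\<lambda>y. h (a * y + b)) | h. sm1 h}"])
  fix k assume "k \<in> {(\<lambda>y. h (a * y + b)) | h. sm1 h}"
  then obtain h where h: "k = (\<lambda>y. h (a * y + b))" "sm1 h" by blast
  have "\<forall>x. (k has_real_derivative (\<lambda>z. a * deriv h z) (a * x + b)) (at x)"
  proof
    fix x
    have "((\<lambda>y. h (a * y + b)) has_real_derivative deriv h (a * x + b) * a) (at x)"
      by (rule DERIV_chain2[OF sm1_deriv(2)[OF h(2)]]) (auto intro!: derivative_eq_intros)
    then show "(k has_real_derivative (\<lambda>z. a * deriv h z) (a * x + b)) (at x)"
      using h by (simp add: mult.commute)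
  qed
  moreover have "sm1 (\<lambda>z. a * deriv h z)" using sm1_cmult sm1_deriv(1) h(2) by blast
  ultimately show "\<exists>h'\<in>{(\<lambda>y. h (a * y + b)) | h. sm1 h}. \<forall>x. (k has_real_derivative h' x) (at x)"
    by (intro bexI[of _ "\<lambda>y. a * deriv h (a * y + b)"]) auto
qed (use assms in auto)

lemma sm1_antideriv:
  assumes g: "sm1 g" and R: "R \<ge> 0" and supp: "\<And>y. \<bar>y\<bar> \<ge> R \<Longrightarrow> g y = 0"
  defines "A \<equiv> (\<lambda>y. integral {-R-1..y} g)"
  shows "\<And>x. (A has_real_derivative g x) (at x)" "\<And>y. y \<le> -R \<Longrightarrow> A y = 0"
    "\<And>y. y \<ge> R \<Longrightarrow> A y = A R"
proof -
  have cont: "continuous_on S g" for S using sm1_cont[OF g] continuous_on_subset by blast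
  show z: "A y = 0" if "y \<le> -R" for y
  proof -
    have "integral {-R-1..y} g = integral {-R-1..y} (\<lambda>_. 0::real)"
      by (rule integral_cong) (use that supp in auto)
    then show ?thesis by (simp add: A_def)
  qed
  show "A y = A R" if "y \<ge> R" for y
  proof -
    have "integral {-R-1..y} g = integral {-R-1..R} g + integral {R..y} g"
      by (rule Henstock_Kurzweil_Integration.integral_combine[symmetric]) (use that R in \<open>auto intro!: integrable_continuous_real cont\<close>)
    moreover have "integral {R..y} g = integral {R..y} (\<lambda>_. 0::real)"
      by (rule integral_cong) (use that supp R in auto)
    ultimately show ?thesis by (simp add: A_def)
  qed
  fix x
  show "(A has_real_derivative g x) (at x)"
  proof (cases "x < -R")
    case True
    have "((\<lambda>_. 0) has_real_derivative g x) (at x)" using supp[of x] True by simp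
    then show ?thesis
      by (rule has_field_derivative_transform_within_open[where S="{..<-R}"]) (use True z in auto)
  next
    case False
    have "(A has_real_derivative g x) (at x within {-R-1..x+1})"
      unfolding A_def by (rule integral_has_real_derivative) (use False in \<open>auto intro: cont\<close>)
    moreover have "at x within {-R-1..x+1} = at x"
      by (rule at_within_interior) (use False in auto)
    ultimately show ?thesis by simp
  qed
qed

definition pprod :: "('a::euclidean_space \<Rightarrow> real \<Rightarrow> real) \<Rightarrow> 'a \<Rightarrow> real" where
  "pprod g x = (\<Prod>c\<in>Basis. g c (x \<bullet> c))"

inductive_set PS :: "('a::euclidean_space \<Rightarrow> real) set" where
  PS_prod: "(\<And>c. c \<in> Basis \<Longrightarrow> sm1 (g c)) \<Longrightarrow> pprod g \<in> PS"
| PS_add: "f \<in> PS \<Longrightarrow> h \<in> PS \<Longrightarrow> (\<lambda>x. f x + h x) \<in> PS"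

lemma PS_zero: "(\<lambda>_. 0) \<in> PS"
proof -
  have "pprod (\<lambda>c y. 0) = (\<lambda>_::'a. 0::real)"
    by (auto simp: pprod_def fun_eq_iff prod_zero_iff)
  moreover have "pprod (\<lambda>c y. 0) \<in> (PS :: ('a \<Rightarrow> real) set)" by (rule PS_prod) (rule sm1_const)
  ultimately show ?thesis by simp
qed

lemma PS_sum: "finite I \<Longrightarrow> (\<And>i. i \<in> I \<Longrightarrow> f i \<in> PS) \<Longrightarrow> (\<lambda>x. \<Sum>i\<in>I. f i x) \<in> PS"
  proof (induction I rule: finite_induct)
  case empty then show ?case by (simp add: PS_zero)
next
  case (insert i I)
  then have "(\<lambda>x. f i x + (\<Sum>i\<in>I. f i x)) \<in> PS" by (intro PS_add) auto
  then show ?case using insert by simp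
qed

lemma pprod_has_derivative:
  assumes "\<And>c. c \<in> Basis \<Longrightarrow> sm1 (g c)"
  shows "(pprod g has_derivative
     (\<lambda>d. \<Sum>c\<in>Basis. ((d \<bullet> c) * deriv (g c) (x \<bullet> c)) * (\<Prod>j\<in>Basis - {c}. g j (x \<bullet> j)))) (at x)"
  unfolding pprod_def
proof (rule has_derivative_prod)
  fix c :: 'a assume c: "c \<in> Basis"
  show "((\<lambda>x. g c (x \<bullet> c)) has_derivative (\<lambda>d. (d \<bullet> c) * deriv (g c) (x \<bullet> c))) (at x)"
    by (rule DERIV_compose_FDERIV[OF sm1_deriv(2)[OF assms[OF c]]])
       (rule bounded_linear_imp_has_derivative[OF bounded_linear_inner_left])
qed

lemma pprod_deriv_repr:
  assumes "c \<in> Basis"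
  shows "pprod (\<lambda>j. if j = c then (\<lambda>y. a * deriv (g c) y) else g j) x
     = (a * deriv (g c) (x \<bullet> c)) * (\<Prod>j\<in>Basis - {c}. g j (x \<bullet> j))"
proof -
  have "pprod (\<lambda>j. if j = c then (\<lambda>y. a * deriv (g c) y) else g j) x
      = (a * deriv (g c) (x \<bullet> c)) * (\<Prod>j\<in>Basis - {c}. (if j = c then (\<lambda>y. a * deriv (g c) y) else g j) (x \<bullet> j))"
    unfolding pprod_def using assms by (subst prod.remove[of _ c]) auto
  also have "(\<Prod>j\<in>Basis - {c}. (if j = c then (\<lambda>y. a * deriv (g c) y) else g j) (x \<bullet> j))
      = (\<Prod>j\<in>Basis - {c}. g j (x \<bullet> j))" by (rule prod.cong) auto
  finally show ?thesis by simp
qed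

lemma PS_deriv:
  assumes "f \<in> PS"
  shows "\<exists>D. (\<forall>x. (f has_derivative D x) (at x)) \<and> (\<forall>d. (\<lambda>x. D x d) \<in> PS)"
  using assms
proof induction
  case (PS_prod g)
  let ?D = "\<lambda>x d. \<Sum>c\<in>Basis. ((d \<bullet> c) * deriv (g c) (x \<bullet> c)) * (\<Prod>j\<in>Basis - {c}. g j (x \<bullet> j))"
  show ?case
  proof (intro exI[of _ ?D] conjI allI)
    fix x show "(pprod g has_derivative ?D x) (at x)" by (rule pprod_has_derivative) (use PS_prod in auto)
  next
    fix d :: 'a
    have "(\<lambda>x. \<Sum>c\<in>Basis. pprod (\<lambda>j. if j = c then (\<lambda>y. (d \<bullet> c) * deriv (g c) y) else g j) x) \<in> PS"
    proof (rule PS_sum)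
      fix c :: 'a assume c: "c \<in> Basis"
      show "pprod (\<lambda>j. if j = c then (\<lambda>y. (d \<bullet> c) * deriv (g c) y) else g j) \<in> PS"
        by (rule PS.PS_prod) (use PS_prod c sm1_cmult sm1_deriv(1) in auto)
    qed simp
    then show "(\<lambda>x. ?D x d) \<in> PS" by (simp add: pprod_deriv_repr)
  qed
next
  case (PS_add f h)
  then obtain D1 D2 where D: "\<And>x. (f has_derivative D1 x) (at x)" "\<And>d. (\<lambda>x. D1 x d) \<in> PS"
    "\<And>x. (h has_derivative D2 x) (at x)" "\<And>d. (\<lambda>x. D2 x d) \<in> PS" by blast
  show ?case
    by (rule exI[of _ "\<lambda>x d. D1 x d + D2 x d"]) (auto intro!: has_derivative_add D PS.PS_add)
qed

lemma PS_differentiable: "f \<in> PS \<Longrightarrow> f differentiable (at x)"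
  using PS_deriv unfolding differentiable_def by blast

lemma PS_frechet: "f \<in> PS \<Longrightarrow> (\<lambda>x. frechet_derivative f (at x) d) \<in> PS"
proof -
  assume "f \<in> PS"
  then obtain D where D: "\<And>x. (f has_derivative D x) (at x)" "\<And>d. (\<lambda>x. D x d) \<in> PS"
    using PS_deriv by blast
  have "frechet_derivative f (at x) = D x" for x using frechet_derivative_at[OF D(1)] by simp
  then show ?thesis using D(2) by simp
qed

lemma PS_iter: "f \<in> PS \<Longrightarrow> iter_deriv ds f \<in> PS"
  by (induction ds) (auto intro: PS_frechet)

lemma PS_smooth: "f \<in> PS \<Longrightarrow> smooth_fun f"
  unfolding smooth_fun_def using PS_iter PS_differentiable by blast

lemma pprod_frechet_Basis:
  assumes "\<And>c. c \<in> Basis \<Longrightarrow> sm1 (g c)" "b \<in> Basis"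
  shows "frechet_derivative (pprod g) (at x) b = deriv (g b) (x \<bullet> b) * (\<Prod>j\<in>Basis - {b}. g j (x \<bullet> j))"
proof -
  have "frechet_derivative (pprod g) (at x) b =
     (\<Sum>c\<in>Basis. ((b \<bullet> c) * deriv (g c) (x \<bullet> c)) * (\<Prod>j\<in>Basis - {c}. g j (x \<bullet> j)))"
  proof -
    have "frechet_derivative (pprod g) (at x) = (\<lambda>d. \<Sum>c\<in>Basis. ((d \<bullet> c) * deriv (g c) (x \<bullet> c)) * (\<Prod>j\<in>Basis - {c}. g j (x \<bullet> j)))"
      by (rule frechet_derivative_at[symmetric]) (rule pprod_has_derivative[OF assms(1)])
    from fun_cong[OF this, of b] show ?thesis .
  qed
  also have "\<dots> = (\<Sum>c\<in>Basis. if c = b then deriv (g c) (x \<bullet> c) * (\<Prod>j\<in>Basis - {c}. g j (x \<bullet> j)) else 0)"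
    by (rule sum.cong) (use assms(2) in \<open>simp_all add: inner_Basis\<close>)
  also have "\<dots> = deriv (g b) (x \<bullet> b) * (\<Prod>j\<in>Basis - {b}. g j (x \<bullet> j))"
    using assms(2) by (simp add: sum.delta')
  finally show ?thesis .
qed

lemma pprod_support:
  assumes "\<And>c y. c \<in> Basis \<Longrightarrow> \<bar>y\<bar> \<ge> R \<Longrightarrow> g c y = 0"
  shows "{x. pprod g x \<noteq> 0} \<subseteq> cbox (- R *\<^sub>R One) (R *\<^sub>R One)"
proof
  fix x assume "x \<in> {x. pprod g x \<noteq> 0}"
  then have "\<forall>c\<in>Basis. g c (x \<bullet> c) \<noteq> 0" by (auto simp: pprod_def prod_zero_iff)
  then have "\<forall>c\<in>Basis. \<bar>x \<bullet> c\<bar> < R" using assms by force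
  then show "x \<in> cbox (- R *\<^sub>R One) (R *\<^sub>R One)" by (auto simp: mem_box abs_less_iff)
qed

lemma pprod_test:
  assumes "\<And>c. c \<in> Basis \<Longrightarrow> sm1 (g c)" "\<And>c y. c \<in> Basis \<Longrightarrow> \<bar>y\<bar> \<ge> R \<Longrightarrow> g c y = 0"
  shows "test_fun (pprod g)"
  unfolding test_fun_def
proof
  show "smooth_fun (pprod g)" by (rule PS_smooth) (rule PS_prod, rule assms)
  show "compact (closure {x. pprod g x \<noteq> 0})"
    unfolding compact_closure by (rule bounded_subset[OF bounded_cbox pprod_support]) (use assms in auto)
qed

lemma smooth_diff: "smooth_fun f \<Longrightarrow> iter_deriv ds f differentiable (at x)"
  unfolding smooth_fun_def by blast

lemma smooth_cont: "smooth_fun f \<Longrightarrow> continuous_on UNIV f"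
proof -
  assume "smooth_fun f"
  then have "\<And>x. f differentiable (at x)" using smooth_diff[of f "[]"] by simp
  then show ?thesis
    by (meson continuous_at_imp_continuous_on differentiable_imp_continuous_within)
qed

lemma smooth_frechet: "smooth_fun f \<Longrightarrow> smooth_fun (\<lambda>x. frechet_derivative f (at x) b)"
proof -
  assume "smooth_fun f"
  then have "iter_deriv (ds @ [b]) f differentiable (at x)" for ds x by (rule smooth_diff)
  moreover have "iter_deriv (ds @ [b]) f = iter_deriv ds (\<lambda>x. frechet_derivative f (at x) b)" for ds
    by (induction ds) auto
  ultimately show ?thesis unfolding smooth_fun_def by metis
qed

lemma test_cont: "test_fun \<phi> \<Longrightarrow> continuous_on UNIV \<phi>"
  unfolding test_fun_def using smooth_cont by blast

lemma test_dcont: "test_fun \<phi> \<Longrightarrow> continuous_on UNIV (\<lambda>x. frechet_derivative \<phi> (at x) b)"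
  unfolding test_fun_def using smooth_cont smooth_frechet by blast

lemma test_bounded: "test_fun \<phi> \<Longrightarrow> \<exists>B. \<forall>x. \<bar>\<phi> x\<bar> \<le> B"
proof -
  assume t: "test_fun \<phi>"
  let ?K = "closure {x. \<phi> x \<noteq> 0}"
  have cK: "compact ?K" using t unfolding test_fun_def by simp
  have "continuous_on ?K \<phi>" by (rule continuous_on_subset[OF test_cont[OF t]]) simp
  then have "compact (\<phi> ` ?K)" using cK by (rule compact_continuous_image)
  then have "bounded (\<phi> ` ?K)" by (rule compact_imp_bounded)
  then obtain B where B: "\<forall>y\<in>\<phi> ` ?K. norm y \<le> B" unfolding bounded_iff by blast
  have "\<bar>\<phi> x\<bar> \<le> max B 0" for x
  proof (cases "x \<in> ?K")
    case True then have "norm (\<phi> x) \<le> B" using B by simp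
    then show ?thesis by simp
  next
    case False then have "\<phi> x = 0" by (meson closure_subset mem_Collect_eq subsetD)
    then show ?thesis by simp
  qed
  then show ?thesis by (intro exI[of _ "max B 0"]) simp
qed

lemma test_zero_outside: "test_fun \<phi> \<Longrightarrow> \<exists>R. \<forall>x. norm x > R \<longrightarrow> \<phi> x = 0"
proof -
  assume t: "test_fun \<phi>"
  then have "bounded {x. \<phi> x \<noteq> 0}" unfolding test_fun_def compact_closure by (rule conjunct2)
  then obtain R where R: "\<forall>x\<in>{x. \<phi> x \<noteq> 0}. norm x \<le> R" unfolding bounded_iff by blast
  show ?thesis
  proof (intro exI allI impI)
    fix x :: 'a assume "norm x > R"
    show "\<phi> x = 0"
    proof (rule ccontr)
      assume "\<phi> x \<noteq> 0" then have "norm x \<le> R" using R by simp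
      then show False using \<open>norm x > R\<close> by simp
    qed
  qed
qed

lemma iter_deriv_scale:
  assumes "smooth_fun f"
  shows "iter_deriv ds (\<lambda>x. f (s *\<^sub>R x)) = (\<lambda>x. s ^ length ds * iter_deriv ds f (s *\<^sub>R x))"
proof (induction ds)
  case Nil then show ?case by simp
next
  case (Cons d ds)
  let ?h = "iter_deriv ds f"
  have "frechet_derivative (\<lambda>y. s ^ length ds * ?h (s *\<^sub>R y)) (at x) d
        = s ^ length (d # ds) * frechet_derivative ?h (at (s *\<^sub>R x)) d" for x
  proof -
    let ?h' = "frechet_derivative ?h (at (s *\<^sub>R x))"
    have hd: "(?h has_derivative ?h') (at (s *\<^sub>R x))"
      using smooth_diff[OF assms] frechet_derivative_works by blast
    have sd: "((\<lambda>y. s *\<^sub>R y) has_derivative (\<lambda>y. s *\<^sub>R y)) (at x)"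
      by (intro derivative_eq_intros) auto
    have "((\<lambda>y. s ^ length ds * ?h (s *\<^sub>R y)) has_derivative (\<lambda>v. s ^ length ds * ?h' (s *\<^sub>R v))) (at x)"
      using has_derivative_mult_right[OF diff_chain_at[OF sd hd]] by (simp add: o_def)
    then have "frechet_derivative (\<lambda>y. s ^ length ds * ?h (s *\<^sub>R y)) (at x) = (\<lambda>v. s ^ length ds * ?h' (s *\<^sub>R v))"
      by (rule frechet_derivative_at[symmetric])
    moreover have "?h' (s *\<^sub>R d) = s * ?h' d"
      using linear_frechet_derivative[OF smooth_diff[OF assms]] by (simp add: linear_scale)
    ultimately show ?thesis by simp
  qed
  note eq = this
  show ?case
  proof (rule ext)
    fix x show "iter_deriv (d # ds) (\<lambda>x. f (s *\<^sub>R x)) x = s ^ length (d # ds) * iter_deriv (d # ds) f (s *\<^sub>R x)"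
      using eq[of x] by (simp add: Cons.IH)
  qed
qed

lemma test_scale:
  assumes t: "test_fun \<phi>" and s: "s \<noteq> 0"
  shows "test_fun (\<lambda>x. \<phi> (s *\<^sub>R x))"
    "frechet_derivative (\<lambda>x. \<phi> (s *\<^sub>R x)) (at x) b = s * frechet_derivative \<phi> (at (s *\<^sub>R x)) b"
proof -
  have sm: "smooth_fun \<phi>" using t unfolding test_fun_def by blast
  show "frechet_derivative (\<lambda>x. \<phi> (s *\<^sub>R x)) (at x) b = s * frechet_derivative \<phi> (at (s *\<^sub>R x)) b"
    using fun_cong[OF iter_deriv_scale[OF sm, of "[b]" s], of x] by simp
  have "smooth_fun (\<lambda>x. \<phi> (s *\<^sub>R x))"
    unfolding smooth_fun_def
  proof (intro allI)
    fix ds x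
    have "((\<lambda>y. s ^ length ds * iter_deriv ds \<phi> (s *\<^sub>R y)) has_derivative
        (\<lambda>v. s ^ length ds * frechet_derivative (iter_deriv ds \<phi>) (at (s *\<^sub>R x)) (s *\<^sub>R v))) (at x)"
    proof -
      have hd: "(iter_deriv ds \<phi> has_derivative frechet_derivative (iter_deriv ds \<phi>) (at (s *\<^sub>R x))) (at (s *\<^sub>R x))"
        using smooth_diff[OF sm] frechet_derivative_works by blast
      have sd: "((\<lambda>y. s *\<^sub>R y) has_derivative (\<lambda>y. s *\<^sub>R y)) (at x)"
        by (intro derivative_eq_intros) auto
      show ?thesis using has_derivative_mult_right[OF diff_chain_at[OF sd hd]] by (simp add: o_def)
    qed
    then show "iter_deriv ds (\<lambda>x. \<phi> (s *\<^sub>R x)) differentiable (at x)"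
      unfolding iter_deriv_scale[OF sm] differentiable_def by blast
  qed
  moreover have "bounded {x. \<phi> (s *\<^sub>R x) \<noteq> 0}"
  proof -
    have "compact ((\<lambda>y. (1/s) *\<^sub>R y) ` closure {x. \<phi> x \<noteq> 0})"
      using t unfolding test_fun_def by (intro compact_scaling) auto
    moreover have "{x. \<phi> (s *\<^sub>R x) \<noteq> 0} \<subseteq> (\<lambda>y. (1/s) *\<^sub>R y) ` closure {x. \<phi> x \<noteq> 0}"
    proof
      fix x assume "x \<in> {x. \<phi> (s *\<^sub>R x) \<noteq> 0}"
      then have a: "s *\<^sub>R x \<in> closure {x. \<phi> x \<noteq> 0}" by (meson closure_subset mem_Collect_eq subsetD)
      have b: "x = (1/s) *\<^sub>R (s *\<^sub>R x)" using s by simp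
      show "x \<in> (\<lambda>y. (1/s) *\<^sub>R y) ` closure {x. \<phi> x \<noteq> 0}" by (rule image_eqI[where f="\<lambda>y. (1/s) *\<^sub>R y", OF b a])
    qed
    ultimately show ?thesis by (meson bounded_subset compact_imp_bounded)
  qed
  ultimately show "test_fun (\<lambda>x. \<phi> (s *\<^sub>R x))" unfolding test_fun_def by simp
qed

lemma meas_scale:
  fixes f :: "'a::euclidean_space \<Rightarrow> real"
  assumes "f \<in> borel_measurable lebesgue"
  shows "(\<lambda>x. f (s *\<^sub>R x)) \<in> borel_measurable lebesgue"
  using measurable_compose[OF lebesgue_measurable_scaling assms] by (simp add: o_def)

lemma lebesgue_scale:
  fixes f :: "'a::euclidean_space \<Rightarrow> real"
  assumes f: "f \<in> borel_measurable lebesgue" and s: "s \<noteq> 0"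
  shows "integrable lebesgue (\<lambda>x. f (s *\<^sub>R x)) \<longleftrightarrow> integrable lebesgue f"
    "(\<integral>x. f (s *\<^sub>R x) \<partial>lebesgue) = (\<integral>x. f x \<partial>lebesgue) / \<bar>s\<bar> ^ DIM('a)"
proof -
  define T where "T = (\<lambda>x::'a. 0 + (\<Sum>j\<in>Basis. (s * (x \<bullet> j)) *\<^sub>R j))"
  have T: "T = (\<lambda>x. s *\<^sub>R x)"
  proof (rule ext)
    fix x :: 'a
    have "(\<Sum>j\<in>Basis. (s * (x \<bullet> j)) *\<^sub>R j) = s *\<^sub>R (\<Sum>j\<in>Basis. (x \<bullet> j) *\<^sub>R j)"
      by (simp add: scaleR_sum_right)
    then show "T x = s *\<^sub>R x" unfolding T_def by (simp add: euclidean_representation)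
  qed
  have P: "(\<Prod>j\<in>(Basis::'a set). \<bar>s\<bar>) = \<bar>s\<bar> ^ DIM('a)" by simp
  have L: "lebesgue = density (distr lebesgue lebesgue T) (\<lambda>_. \<bar>s\<bar> ^ DIM('a))"
  proof -
    have "lebesgue = density (distr lebesgue lebesgue T) (\<lambda>_. ennreal (\<Prod>j\<in>(Basis::'a set). \<bar>s\<bar>))"
      unfolding T_def by (rule lebesgue_affine_euclidean) (rule s)
    then show ?thesis unfolding P .
  qed
  have Tm: "T \<in> lebesgue \<rightarrow>\<^sub>M lebesgue" unfolding T by (rule lebesgue_measurable_scaling)
  have fm: "f \<in> borel_measurable (distr lebesgue lebesgue T)" using f by simp
  have Ps: "\<bar>s\<bar> ^ DIM('a) > 0" using s by simp
  have "integrable lebesgue f \<longleftrightarrow> integrable (density (distr lebesgue lebesgue T) (\<lambda>_. \<bar>s\<bar> ^ DIM('a))) f"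
    by (subst L) (rule refl)
  also have "\<dots> \<longleftrightarrow> integrable (distr lebesgue lebesgue T) (\<lambda>x. (\<bar>s\<bar> ^ DIM('a)) *\<^sub>R f x)"
    by (rule integrable_density) (use fm in auto)
  also have "\<dots> \<longleftrightarrow> integrable lebesgue (\<lambda>x. (\<bar>s\<bar> ^ DIM('a)) *\<^sub>R f (T x))"
    by (rule integrable_distr_eq) (use Tm f in auto)
  also have "\<dots> \<longleftrightarrow> integrable lebesgue (\<lambda>x. f (T x))"
    using Ps by simp
  finally show "integrable lebesgue (\<lambda>x. f (s *\<^sub>R x)) \<longleftrightarrow> integrable lebesgue f" unfolding T by simp
  have "(\<integral>x. f x \<partial>lebesgue) = (\<integral>x. f x \<partial>density (distr lebesgue lebesgue T) (\<lambda>_. \<bar>s\<bar> ^ DIM('a)))"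
    by (subst L) (rule refl)
  also have "\<dots> = (\<integral>x. (\<bar>s\<bar> ^ DIM('a)) *\<^sub>R f x \<partial>distr lebesgue lebesgue T)"
    by (rule integral_density) (use fm in auto)
  also have "\<dots> = (\<integral>x. (\<bar>s\<bar> ^ DIM('a)) *\<^sub>R f (T x) \<partial>lebesgue)"
    by (rule integral_distr) (use Tm f in auto)
  also have "\<dots> = \<bar>s\<bar> ^ DIM('a) * (\<integral>x. f (s *\<^sub>R x) \<partial>lebesgue)"
    unfolding T by simp
  finally show "(\<integral>x. f (s *\<^sub>R x) \<partial>lebesgue) = (\<integral>x. f x \<partial>lebesgue) / \<bar>s\<bar> ^ DIM('a)"
    using Ps by (simp add: field_simps)
qed

lemma cont_meas:
  fixes \<phi> :: "'a::euclidean_space \<Rightarrow> real"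
  shows "continuous_on UNIV \<phi> \<Longrightarrow> \<phi> \<in> borel_measurable lebesgue"
  using continuous_imp_measurable_on_sets_lebesgue[of UNIV \<phi>] by simp

lemma L2_mult_int:
  fixes v h :: "'a::euclidean_space \<Rightarrow> real"
  assumes v: "L2 v" and h: "h \<in> borel_measurable lebesgue"
    and hb: "\<And>x. \<bar>h x\<bar> \<le> B * indicator (cbox a b) x"
  shows "integrable lebesgue (\<lambda>x. v x * h x)"
proof (rule Bochner_Integration.integrable_bound[where f="\<lambda>x. \<bar>B\<bar> * ((v x)\<^sup>2 + indicator (cbox a b) x)"])
  have fm: "cbox a b \<in> fmeasurable lebesgue" using lmeasurable_cbox by blast
  have i1: "integrable lebesgue (indicator (cbox a b) :: 'a \<Rightarrow> real)"
    using fm by (intro integrable_real_indicator) (auto simp: fmeasurable_def)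
  show "integrable lebesgue (\<lambda>x. \<bar>B\<bar> * ((v x)\<^sup>2 + indicator (cbox a b) x))"
    using v i1 unfolding L2_def by (intro integrable_mult_right Bochner_Integration.integrable_add) auto
  show "(\<lambda>x. v x * h x) \<in> borel_measurable lebesgue" using v h unfolding L2_def by (intro borel_measurable_times) auto
  show "AE x in lebesgue. norm (v x * h x) \<le> norm (\<bar>B\<bar> * ((v x)\<^sup>2 + indicator (cbox a b) x))"
  proof (rule AE_I2)
    fix x
    have "\<bar>h x\<bar> \<le> \<bar>B\<bar> * indicator (cbox a b) x"
      using hb[of x] by (smt (verit) indicator_pos_le mult_right_mono)
    have "\<bar>v x * h x\<bar> \<le> \<bar>B\<bar> * ((v x)\<^sup>2 + indicator (cbox a b) x)"
    proof (cases "x \<in> cbox a b")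
      case True
      then have hx: "\<bar>h x\<bar> \<le> \<bar>B\<bar>" using \<open>\<bar>h x\<bar> \<le> \<bar>B\<bar> * indicator (cbox a b) x\<close> by simp
      have "0 \<le> (\<bar>v x\<bar> - 1)\<^sup>2" by simp
      moreover have "(\<bar>v x\<bar> - 1)\<^sup>2 = (v x)\<^sup>2 - 2 * \<bar>v x\<bar> + 1"
        by (simp add: power2_eq_square algebra_simps abs_mult_self_eq)
      ultimately have "\<bar>v x\<bar> \<le> (v x)\<^sup>2 + 1" by linarith
      then have "\<bar>v x\<bar> * \<bar>h x\<bar> \<le> ((v x)\<^sup>2 + 1) * \<bar>B\<bar>"
        using hx by (intro mult_mono) auto
      then show ?thesis using True by (simp add: abs_mult mult.commute)
    next
      case False
      then show ?thesis using \<open>\<bar>h x\<bar> \<le> \<bar>B\<bar> * indicator (cbox a b) x\<close> by simp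
    qed
    then show "norm (v x * h x) \<le> norm (\<bar>B\<bar> * ((v x)\<^sup>2 + indicator (cbox a b) x))"
      by (simp add: abs_mult)
  qed
qed

lemma norm_le_cbox:
  fixes x :: "'a::euclidean_space"
  assumes "norm x \<le> R"
  shows "x \<in> cbox (- R *\<^sub>R One) (R *\<^sub>R One)"
proof -
  have abs1: "\<bar>x \<bullet> c\<bar> \<le> R" if "c \<in> Basis" for c
    using Basis_le_norm[OF that, of x] assms by simp
  have "-R \<le> x \<bullet> c \<and> x \<bullet> c \<le> R" if "c \<in> Basis" for c using abs1[OF that] by linarith
  then show ?thesis by (simp add: mem_box)
qed

lemma L2_mult_int_supp:
  fixes v \<phi> :: "'a::euclidean_space \<Rightarrow> real"
  assumes v: "L2 v" and c: "continuous_on UNIV \<phi>" and B: "\<And>x. \<bar>\<phi> x\<bar> \<le> B"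
    and R: "\<And>x. norm x > R \<Longrightarrow> \<phi> x = 0"
  shows "integrable lebesgue (\<lambda>x. v x * \<phi> x)"
proof (rule L2_mult_int[OF v cont_meas[OF c]])
  fix x
  show "\<bar>\<phi> x\<bar> \<le> B * indicator (cbox (- R *\<^sub>R One) (R *\<^sub>R One)) x"
  proof (cases "norm x > R")
    case True then show ?thesis using R[OF True] B[of x] by (simp split: split_indicator)
  next
    case False then show ?thesis using norm_le_cbox[of x R] B[of x] by simp
  qed
qed

lemma L2_mult_test:
  fixes v \<phi> :: "'a::euclidean_space \<Rightarrow> real"
  assumes v: "L2 v" and t: "test_fun \<phi>"
  shows "integrable lebesgue (\<lambda>x. v x * \<phi> x)"
proof -
  obtain B where "\<And>x. \<bar>\<phi> x\<bar> \<le> B" using test_bounded[OF t] by blast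
  moreover obtain R where "\<And>x. norm x > R \<Longrightarrow> \<phi> x = 0" using test_zero_outside[OF t] by blast
  ultimately show ?thesis using L2_mult_int_supp[OF v test_cont[OF t]] by blast
qed

definition psi :: "nat \<Rightarrow> real \<Rightarrow> real \<Rightarrow> real \<Rightarrow> real" where
  "psi n lo hi y = fb (real (Suc n) * (y - lo)) * fb (real (Suc n) * (hi - y))"

lemma fb_nonneg: "0 \<le> fb y" by (simp add: fb_def)
lemma fb_le1: "fb y \<le> 1" by (simp add: fb_def)
lemma fb_zero: "y \<le> 0 \<Longrightarrow> fb y = 0" by (simp add: fb_def)

lemma sm1_psi: "sm1 (psi n lo hi)"
proof -
  have e: "psi n lo hi = (\<lambda>y. fb (real (Suc n) * y + (- real (Suc n) * lo)) * fb ((- real (Suc n)) * y + real (Suc n) * hi))"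
    by (simp add: psi_def fun_eq_iff algebra_simps)
  show ?thesis unfolding e by (intro sm1_mult sm1_affine sm1_fb)
qed

lemma psi_nonneg: "0 \<le> psi n lo hi y" by (simp add: psi_def fb_nonneg)
lemma psi_le1: "psi n lo hi y \<le> 1"
  unfolding psi_def by (rule mult_le_one[OF fb_le1 fb_nonneg fb_le1])

lemma psi_zero: "y \<le> lo \<or> y \<ge> hi \<Longrightarrow> psi n lo hi y = 0"
proof -
  assume "y \<le> lo \<or> y \<ge> hi"
  then have "real (Suc n) * (y - lo) \<le> 0 \<or> real (Suc n) * (hi - y) \<le> 0"
    by (auto simp: mult_nonneg_nonpos)
  then show ?thesis unfolding psi_def using fb_zero by auto
qed

lemma fb_lim: assumes "t > 0" shows "(\<lambda>n. fb (real (Suc n) * t)) \<longlonglongrightarrow> 1"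
proof -
  have "(\<lambda>n. exp (- (inverse t * inverse (real (Suc n))))) \<longlonglongrightarrow> exp (- (inverse t * 0))"
    by (intro tendsto_intros LIMSEQ_inverse_real_of_nat)
  moreover have "fb (real (Suc n) * t) = exp (- (inverse t * inverse (real (Suc n))))" for n
    using assms by (simp add: fb_def mult.commute)
  ultimately show ?thesis by simp
qed

lemma psi_lim: "(\<lambda>n. psi n lo hi y) \<longlonglongrightarrow> (if lo < y \<and> y < hi then 1 else 0)"
proof (cases "lo < y \<and> y < hi")
  case True
  have "(\<lambda>n. psi n lo hi y) \<longlonglongrightarrow> 1 * 1"
    unfolding psi_def by (intro tendsto_mult fb_lim) (use True in auto)
  then show ?thesis using True by simp
next
  case False
  then have "psi n lo hi y = 0" for n by (intro psi_zero) auto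
  moreover have "(if lo < y \<and> y < hi then 1 else 0) = (0::real)" using False by auto
  ultimately show ?thesis by simp
qed

definition boxfun :: "nat \<Rightarrow> 'a::euclidean_space \<Rightarrow> 'a \<Rightarrow> 'a \<Rightarrow> real \<Rightarrow> real" where
  "boxfun n a b c = psi n (a \<bullet> c) (b \<bullet> c)"

lemma boxfun_lim: "(\<lambda>n. pprod (boxfun n a b) x) \<longlonglongrightarrow> indicator (box a b) x"
proof -
  have "(\<lambda>n. pprod (boxfun n a b) x) \<longlonglongrightarrow> (\<Prod>c\<in>Basis. (if a \<bullet> c < x \<bullet> c \<and> x \<bullet> c < b \<bullet> c then 1 else 0))"
    unfolding pprod_def boxfun_def by (intro tendsto_prod psi_lim)
  moreover have "(\<Prod>c\<in>Basis. (if a \<bullet> c < x \<bullet> c \<and> x \<bullet> c < b \<bullet> c then 1 else 0)) = (indicator (box a b) x :: real)"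
    by (auto simp: mem_box indicator_def prod_zero_iff)
  ultimately show ?thesis by simp
qed

lemma boxfun_bound: "\<bar>pprod (boxfun n a b) x\<bar> \<le> indicator (cbox a b) x"
proof (cases "x \<in> box a b")
  case True
  then have "x \<in> cbox a b" using box_subset_cbox by blast
  moreover have "pprod (boxfun n a b) x \<le> 1" unfolding pprod_def
    by (rule prod_le_1) (auto simp: boxfun_def psi_nonneg psi_le1)
  moreover have "pprod (boxfun n a b) x \<ge> 0" unfolding pprod_def
    by (rule prod_nonneg) (auto simp: boxfun_def psi_nonneg)
  ultimately show ?thesis by simp
next
  case False
  then obtain c where c: "c \<in> Basis" "x \<bullet> c \<le> a \<bullet> c \<or> x \<bullet> c \<ge> b \<bullet> c"
    by (auto simp: mem_box not_less)
  then have "boxfun n a b c (x \<bullet> c) = 0" unfolding boxfun_def by (intro psi_zero) auto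
  then have "pprod (boxfun n a b) x = 0" unfolding pprod_def using c(1) by (intro prod_zero) auto
  then show ?thesis by simp
qed

lemma boxfun_sm1: "sm1 (boxfun n a b c)" unfolding boxfun_def by (rule sm1_psi)

lemma boxfun_supp:
  assumes c: "c \<in> Basis" and y: "norm a + norm b + 1 \<le> \<bar>y\<bar>"
  shows "boxfun n a b c y = 0"
proof -
  have "\<bar>a \<bullet> c\<bar> \<le> norm a" "\<bar>b \<bullet> c\<bar> \<le> norm b" using Basis_le_norm[OF c] by auto
  then have "y \<le> a \<bullet> c \<or> y \<ge> b \<bullet> c" using y by linarith
  then show ?thesis unfolding boxfun_def by (rule psi_zero)
qed

lemma boxfun_cont: "continuous_on UNIV (pprod (boxfun n a b))"
proof -
  have "pprod (boxfun n a b) \<in> PS" by (rule PS_prod) (rule boxfun_sm1)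
  then show ?thesis using PS_differentiable
    by (meson continuous_at_imp_continuous_on differentiable_imp_continuous_within)
qed

lemma box_int_zero:
  fixes v :: "'a::euclidean_space \<Rightarrow> real"
  assumes v: "L2 v"
    and H: "\<And>g R. (\<And>c. c \<in> Basis \<Longrightarrow> sm1 (g c)) \<Longrightarrow> (\<And>c y. c \<in> Basis \<Longrightarrow> R \<le> \<bar>y\<bar> \<Longrightarrow> g c y = 0)
               \<Longrightarrow> (\<integral>x. v x * pprod g x \<partial>lebesgue) = 0"
  shows "(\<integral>x. v x * indicator (box a b) x \<partial>lebesgue) = 0"
proof -
  have vm: "v \<in> borel_measurable lebesgue" using v unfolding L2_def by blast
  have cm: "cbox a b \<in> sets lebesgue" using lmeasurable_cbox[of a b] by (simp add: fmeasurable_def)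
  have bm: "box a b \<in> sets lebesgue" using lmeasurable_box[of a b] by (simp add: fmeasurable_def)
  have wi: "integrable lebesgue (\<lambda>x. v x * indicator (cbox a b) x)"
    by (rule L2_mult_int[OF v borel_measurable_indicator[OF cm], where B=1 and a=a and b=b]) simp
  have "(\<lambda>n. \<integral>x. v x * pprod (boxfun n a b) x \<partial>lebesgue) \<longlonglongrightarrow> (\<integral>x. v x * indicator (box a b) x \<partial>lebesgue)"
  proof (rule integral_dominated_convergence[where w="\<lambda>x. \<bar>v x * indicator (cbox a b) x\<bar>"])
    show "(\<lambda>x. v x * indicator (box a b) x) \<in> borel_measurable lebesgue"
      using vm borel_measurable_indicator[OF bm] by (intro borel_measurable_times) auto
    show "(\<lambda>x. v x * pprod (boxfun n a b) x) \<in> borel_measurable lebesgue" for n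
      using vm cont_meas[OF boxfun_cont] by (intro borel_measurable_times) auto
    show "integrable lebesgue (\<lambda>x. \<bar>v x * indicator (cbox a b) x\<bar>)" using wi by (rule integrable_abs)
    show "AE x in lebesgue. (\<lambda>n. v x * pprod (boxfun n a b) x) \<longlonglongrightarrow> v x * indicator (box a b) x"
      by (intro AE_I2 tendsto_mult tendsto_const boxfun_lim)
    show "AE x in lebesgue. norm (v x * pprod (boxfun n a b) x) \<le> \<bar>v x * indicator (cbox a b) x\<bar>" for n
    proof (rule AE_I2)
      fix x
      have "\<bar>v x\<bar> * \<bar>pprod (boxfun n a b) x\<bar> \<le> \<bar>v x\<bar> * indicator (cbox a b) x"
        by (rule mult_left_mono[OF boxfun_bound]) simp
      then show "norm (v x * pprod (boxfun n a b) x) \<le> \<bar>v x * indicator (cbox a b) x\<bar>"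
        by (simp add: abs_mult)
    qed
  qed
  moreover have "(\<integral>x. v x * pprod (boxfun n a b) x \<partial>lebesgue) = 0" for n
    by (rule H[where R="norm a + norm b + 1"]) (auto intro: boxfun_sm1 boxfun_supp)
  ultimately have "(\<lambda>n. 0::real) \<longlonglongrightarrow> (\<integral>x. v x * indicator (box a b) x \<partial>lebesgue)" by simp
  from LIMSEQ_unique[OF tendsto_const this] show ?thesis by simp
qed

lemma nn_part_box:
  fixes g :: "'a::euclidean_space \<Rightarrow> real"
  assumes gm[measurable]: "g \<in> borel_measurable lborel" and gi: "integrable lborel g"
    and X: "X \<in> sets lborel"
  shows "emeasure (density lborel (\<lambda>x. ennreal (max 0 (g x)))) X
         = ennreal (\<integral>x. max 0 (g x) * indicator X x \<partial>lborel)"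
proof -
  have Xm[measurable]: "X \<in> sets borel" using X by simp
  have ii: "integrable lborel (\<lambda>x. max 0 (g x) * indicator X x)"
    by (rule Bochner_Integration.integrable_bound[OF gi]) (auto split: split_indicator)
  have "emeasure (density lborel (\<lambda>x. ennreal (max 0 (g x)))) X
      = (\<integral>\<^sup>+x. ennreal (max 0 (g x)) * indicator X x \<partial>lborel)"
    by (rule emeasure_density) auto
  also have "\<dots> = (\<integral>\<^sup>+x. ennreal (max 0 (g x) * indicator X x) \<partial>lborel)"
    by (rule nn_integral_cong) (auto split: split_indicator)
  also have "\<dots> = ennreal (\<integral>x. max 0 (g x) * indicator X x \<partial>lborel)"
    by (rule nn_integral_eq_integral[OF ii]) auto
  finally show ?thesis .
qed

lemma box_family_Int_stable: "Int_stable (range (\<lambda>(a, b). box a b :: 'a::euclidean_space set))"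
  unfolding Int_stable_def
proof (intro ballI)
  fix X Y assume "X \<in> range (\<lambda>(a, b). box a b :: 'a set)" "Y \<in> range (\<lambda>(a, b). box a b :: 'a set)"
  then obtain a b c d :: 'a where XY: "X = box a b" "Y = box c d" by auto
  have "X \<inter> Y = box (\<Sum>i\<in>Basis. max (a\<bullet>i) (c\<bullet>i) *\<^sub>R i) (\<Sum>i\<in>Basis. min (b\<bullet>i) (d\<bullet>i) *\<^sub>R i)"
    unfolding XY by (rule box_Int_box)
  then show "X \<inter> Y \<in> range (\<lambda>(a, b). box a b)"
    by (intro range_eqI[where x="((\<Sum>i\<in>Basis. max (a\<bullet>i) (c\<bullet>i) *\<^sub>R i), (\<Sum>i\<in>Basis. min (b\<bullet>i) (d\<bullet>i) *\<^sub>R i))"]) simp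
qed

lemma ae_zero_lborel:
  fixes g :: "'a::euclidean_space \<Rightarrow> real"
  assumes gm[measurable]: "g \<in> borel_measurable lborel" and gi: "integrable lborel g"
    and H: "\<And>a b. (\<integral>x. g x * indicator (box a b) x \<partial>lborel) = 0"
  shows "AE x in lborel. g x = 0"
proof -
  let ?E = "range (\<lambda>(a, b). box a b :: 'a set)"
  let ?M1 = "density lborel (\<lambda>x. ennreal (max 0 (g x)))"
  let ?M2 = "density lborel (\<lambda>x. ennreal (max 0 (- g x)))"
  have gi2: "integrable lborel (\<lambda>x. - g x)" using gi by simp
  have eqE: "emeasure ?M1 X = emeasure ?M2 X" if "X \<in> ?E" for X
  proof -
    obtain a b where X: "X = box a b" using \<open>X \<in> ?E\<close> by auto
    have Xs: "X \<in> sets lborel" unfolding X by simp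
    have Xb[measurable]: "X \<in> sets borel" unfolding X by simp
    have i1: "integrable lborel (\<lambda>x. max 0 (g x) * indicator X x)"
      by (rule Bochner_Integration.integrable_bound[OF gi]) (auto split: split_indicator)
    have i2: "integrable lborel (\<lambda>x. max 0 (- g x) * indicator X x)"
      by (rule Bochner_Integration.integrable_bound[OF gi]) (auto split: split_indicator)
    have "(\<integral>x. max 0 (g x) * indicator X x \<partial>lborel) - (\<integral>x. max 0 (- g x) * indicator X x \<partial>lborel)
        = (\<integral>x. max 0 (g x) * indicator X x - max 0 (- g x) * indicator X x \<partial>lborel)"
      using i1 i2 by simp
    also have "\<dots> = (\<integral>x. g x * indicator X x \<partial>lborel)"
      by (rule Bochner_Integration.integral_cong) (auto split: split_indicator)
    also have "\<dots> = 0" unfolding X by (rule H)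
    finally have "(\<integral>x. max 0 (g x) * indicator X x \<partial>lborel) = (\<integral>x. max 0 (- g x) * indicator X x \<partial>lborel)"
      by simp
    then show ?thesis
      using nn_part_box[OF gm gi Xs] nn_part_box[of "\<lambda>x. - g x", OF _ gi2 Xs] by simp
  qed
  have fin: "emeasure ?M1 X \<noteq> \<infinity>" if "X \<in> ?E" for X
  proof -
    obtain a b where X: "X = box a b" using \<open>X \<in> ?E\<close> by auto
    have Xs: "X \<in> sets lborel" unfolding X by simp
    show ?thesis using nn_part_box[OF gm gi Xs] by simp
  qed
  have sE: "sets lborel = sigma_sets UNIV ?E"
  proof -
    have "sets lborel = sets (borel :: 'a measure)" by simp
    also have "\<dots> = sets (sigma UNIV ?E)" by (subst borel_eq_box) (rule refl)
    also have "\<dots> = sigma_sets UNIV ?E" by (rule sets_measure_of) simp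
    finally show ?thesis .
  qed
  have "?M1 = ?M2"
  proof (rule measure_eqI_generator_eq[where E="?E" and \<Omega>=UNIV and A="\<lambda>i. box (- real i *\<^sub>R One) (real i *\<^sub>R One)"])
    show "Int_stable ?E" by (rule box_family_Int_stable)
    show "?E \<subseteq> Pow UNIV" by simp
    show "\<And>X. X \<in> ?E \<Longrightarrow> emeasure ?M1 X = emeasure ?M2 X" by (rule eqE)
    show "sets ?M1 = sigma_sets UNIV ?E" using sE by simp
    show "sets ?M2 = sigma_sets UNIV ?E" using sE by simp
    show "range (\<lambda>i. box (- real i *\<^sub>R One) (real i *\<^sub>R One)) \<subseteq> ?E" by auto
    show "(\<Union>i. box (- real i *\<^sub>R One) (real i *\<^sub>R One)) = (UNIV :: 'a set)"
    proof (intro set_eqI iffI)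
      fix x :: 'a
      obtain n :: nat where n: "norm x + 1 \<le> real n" using real_arch_simple by blast
      have "x \<in> box (- real n *\<^sub>R One) (real n *\<^sub>R One)"
        unfolding mem_box
      proof
        fix c :: 'a assume c: "c \<in> Basis"
        have "\<bar>x \<bullet> c\<bar> \<le> norm x" by (rule Basis_le_norm[OF c])
        then show "(- real n *\<^sub>R One) \<bullet> c < x \<bullet> c \<and> x \<bullet> c < (real n *\<^sub>R One) \<bullet> c"
          using c n by (auto simp: abs_le_iff)
      qed
      then show "x \<in> (\<Union>i. box (- real i *\<^sub>R One) (real i *\<^sub>R One))" by blast
    qed simp
    show "emeasure ?M1 (box (- real i *\<^sub>R One) (real i *\<^sub>R One)) \<noteq> \<infinity>" for i
      by (rule fin) auto
  qed
  then have "AE x in lborel. ennreal (max 0 (g x)) = ennreal (max 0 (- g x))"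
    by (intro sigma_finite_measure.density_unique[OF sigma_finite_lborel]) auto
  then show ?thesis
  proof (rule eventually_mono)
    fix x assume "ennreal (max 0 (g x)) = ennreal (max 0 (- g x))"
    then have "max 0 (g x) = max 0 (- g x)" by (subst (asm) ennreal_inj) auto
    then show "g x = 0" by (cases "g x \<ge> 0") auto
  qed
qed

lemma in_big_box:
  fixes x :: "'a::euclidean_space"
  shows "\<exists>n::nat. x \<in> box (- real n *\<^sub>R One) (real n *\<^sub>R One)"
proof -
  obtain n :: nat where n: "norm x + 1 \<le> real n" using real_arch_simple by blast
  have "x \<in> box (- real n *\<^sub>R One) (real n *\<^sub>R One)"
    unfolding mem_box
  proof
    fix c :: 'a assume c: "c \<in> Basis"
    have "\<bar>x \<bullet> c\<bar> \<le> norm x" by (rule Basis_le_norm[OF c])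
    then show "(- real n *\<^sub>R One) \<bullet> c < x \<bullet> c \<and> x \<bullet> c < (real n *\<^sub>R One) \<bullet> c"
      using c n by (auto simp: abs_le_iff)
  qed
  then show ?thesis by blast
qed

lemma ae_zero_lebesgue:
  fixes v :: "'a::euclidean_space \<Rightarrow> real"
  assumes vm: "v \<in> borel_measurable lebesgue"
    and vi: "\<And>a b. integrable lebesgue (\<lambda>x. v x * indicator (cbox a b) x)"
    and H: "\<And>a b. (\<integral>x. v x * indicator (box a b) x \<partial>lebesgue) = 0"
  shows "AE x in lebesgue. v x = 0"
proof -
  have step: "AE x in lebesgue. v x * indicator (box (- real n *\<^sub>R One) (real n *\<^sub>R One)) x = 0" for n :: nat
  proof -
    define C where "C = box (- real n *\<^sub>R One) (real n *\<^sub>R One :: 'a)"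
    define w where "w = (\<lambda>x. v x * indicator C x)"
    have Cs: "C \<in> sets lebesgue" unfolding C_def using lmeasurable_box by (simp add: fmeasurable_def)
    have wm: "w \<in> borel_measurable lebesgue"
      unfolding w_def using vm borel_measurable_indicator[OF Cs] by (intro borel_measurable_times) auto
    have wi: "integrable lebesgue w"
    proof -
      have "integrable lebesgue (\<lambda>x. indicator C x *\<^sub>R (v x * indicator (cbox (- real n *\<^sub>R One) (real n *\<^sub>R One)) x))"
        by (rule integrable_mult_indicator[OF Cs vi])
      moreover have "indicator C x *\<^sub>R (v x * indicator (cbox (- real n *\<^sub>R One) (real n *\<^sub>R One)) x) = w x" for x
        unfolding w_def C_def using box_subset_cbox by (auto split: split_indicator)
      ultimately show ?thesis by simp
    qed
    obtain g where gm: "g \<in> borel_measurable lborel" and wg: "AE x in lborel. w x = g x"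
      using completion_ex_borel_measurable_real[OF wm] by blast
    have wg': "AE x in lebesgue. w x = g x" using AE_completion[OF wg] .
    have gm': "g \<in> borel_measurable lebesgue" using measurable_completion[OF gm] .
    have gil: "integrable lebesgue g" using integrable_cong_AE_imp[OF wi gm' wg'] .
    have gi: "integrable lborel g" using gil integrable_completion[OF gm] by simp
    have "(\<integral>x. g x * indicator (box a b) x \<partial>lborel) = 0" for a b
    proof -
      have bs: "box a b \<in> sets lborel" by simp
      have m1: "(\<lambda>x. g x * indicator (box a b) x) \<in> borel_measurable lborel"
        using gm by (intro borel_measurable_times) auto
      have "(\<integral>x. g x * indicator (box a b) x \<partial>lborel) = (\<integral>x. g x * indicator (box a b) x \<partial>lebesgue)"
        by (rule integral_completion[OF m1, symmetric])
      also have "\<dots> = (\<integral>x. w x * indicator (box a b) x \<partial>lebesgue)"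
      proof (rule integral_cong_AE)
        show "(\<lambda>x. g x * indicator (box a b) x) \<in> borel_measurable lebesgue"
          using measurable_completion[OF m1] .
        show "(\<lambda>x. w x * indicator (box a b) x) \<in> borel_measurable lebesgue"
        proof -
          have bm: "box a b \<in> sets lebesgue" using lmeasurable_box[of a b] by (simp add: fmeasurable_def)
          show ?thesis using wm borel_measurable_indicator[OF bm] by (intro borel_measurable_times) auto
        qed
        show "AE x in lebesgue. g x * indicator (box a b) x = w x * indicator (box a b) x"
          using wg' by (rule eventually_mono) simp
      qed
      also have "\<dots> = (\<integral>x. v x * indicator (C \<inter> box a b) x \<partial>lebesgue)"
        unfolding w_def by (rule Bochner_Integration.integral_cong) (auto split: split_indicator)
      also have "C \<inter> box a b = box (\<Sum>i\<in>Basis. max ((- real n *\<^sub>R One)\<bullet>i) (a\<bullet>i) *\<^sub>R i) (\<Sum>i\<in>Basis. min ((real n *\<^sub>R One)\<bullet>i) (b\<bullet>i) *\<^sub>R i)"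
        unfolding C_def by (rule box_Int_box)
      also have "(\<integral>x. v x * indicator (box (\<Sum>i\<in>Basis. max ((- real n *\<^sub>R One)\<bullet>i) (a\<bullet>i) *\<^sub>R i) (\<Sum>i\<in>Basis. min ((real n *\<^sub>R One)\<bullet>i) (b\<bullet>i) *\<^sub>R i)) x \<partial>lebesgue) = 0"
        by (rule H)
      finally show ?thesis .
    qed
    then have "AE x in lborel. g x = 0" by (rule ae_zero_lborel[OF gm gi])
    then have "AE x in lebesgue. g x = 0" by (rule AE_completion)
    then have "AE x in lebesgue. w x = 0" using wg' by eventually_elim simp
    then show ?thesis unfolding w_def C_def .
  qed
  have "AE x in lebesgue. \<forall>n::nat. v x * indicator (box (- real n *\<^sub>R One) (real n *\<^sub>R One)) x = 0"
    by (rule iffD2[OF AE_all_countable]) (use step in blast)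
  then show ?thesis
  proof (rule eventually_mono)
    fix x assume A: "\<forall>n::nat. v x * indicator (box (- real n *\<^sub>R One) (real n *\<^sub>R One)) x = 0"
    obtain n :: nat where "x \<in> box (- real n *\<^sub>R One) (real n *\<^sub>R One)" using in_big_box by blast
    then show "v x = 0" using A[rule_format, of n] by simp
  qed
qed

lemma fundamental:
  fixes v :: "'a::euclidean_space \<Rightarrow> real"
  assumes v: "L2 v"
    and H: "\<And>g R. (\<And>c. c \<in> Basis \<Longrightarrow> sm1 (g c)) \<Longrightarrow> (\<And>c y. c \<in> Basis \<Longrightarrow> R \<le> \<bar>y\<bar> \<Longrightarrow> g c y = 0)
               \<Longrightarrow> (\<integral>x. v x * pprod g x \<partial>lebesgue) = 0"
  shows "AE x in lebesgue. v x = 0"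
proof (rule ae_zero_lebesgue)
  show "v \<in> borel_measurable lebesgue" using v unfolding L2_def by blast
  fix a b :: 'a
  have cm: "cbox a b \<in> sets lebesgue" using lmeasurable_cbox[of a b] by (simp add: fmeasurable_def)
  show "integrable lebesgue (\<lambda>x. v x * indicator (cbox a b) x)"
    by (rule L2_mult_int[OF v borel_measurable_indicator[OF cm], where B=1 and a=a and b=b]) simp
  show "(\<integral>x. v x * indicator (box a b) x \<partial>lebesgue) = 0"
    by (rule box_int_zero[OF v H])
qed

lemma L2_diff:
  assumes f: "L2 f" and g: "L2 g"
  shows "L2 (\<lambda>x. f x - g x)"
  unfolding L2_def
proof
  have fm: "f \<in> borel_measurable lebesgue" and gm: "g \<in> borel_measurable lebesgue"
    using f g unfolding L2_def by auto
  show "(\<lambda>x. f x - g x) \<in> borel_measurable lebesgue" using fm gm by (rule borel_measurable_diff)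
  show "integrable lebesgue (\<lambda>x. (f x - g x)\<^sup>2)"
  proof (rule Bochner_Integration.integrable_bound[where f="\<lambda>x. 2 * (f x)\<^sup>2 + 2 * (g x)\<^sup>2"])
    show "integrable lebesgue (\<lambda>x. 2 * (f x)\<^sup>2 + 2 * (g x)\<^sup>2)"
      using f g unfolding L2_def by (intro Bochner_Integration.integrable_add integrable_mult_right) auto
    show "(\<lambda>x. (f x - g x)\<^sup>2) \<in> borel_measurable lebesgue"
      using fm gm by (intro borel_measurable_power borel_measurable_diff)
    show "AE x in lebesgue. norm ((f x - g x)\<^sup>2) \<le> norm (2 * (f x)\<^sup>2 + 2 * (g x)\<^sup>2)"
    proof (rule AE_I2)
      fix x
      have "0 \<le> (f x + g x)\<^sup>2" by simp
      then have "(f x - g x)\<^sup>2 \<le> 2 * (f x)\<^sup>2 + 2 * (g x)\<^sup>2"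
        by (simp add: power2_eq_square algebra_simps)
      then show "norm ((f x - g x)\<^sup>2) \<le> norm (2 * (f x)\<^sup>2 + 2 * (g x)\<^sup>2)" by simp
    qed
  qed
qed

lemma weak_unique:
  fixes u :: "'a::euclidean_space \<Rightarrow> real"
  assumes g1: "L2 g1" and g2: "L2 g2" and w1: "weak_partial u b g1" and w2: "weak_partial u b g2"
  shows "AE x in lebesgue. g1 x = g2 x"
proof -
  have "AE x in lebesgue. g1 x - g2 x = 0"
  proof (rule fundamental[OF L2_diff[OF g1 g2]])
    fix g :: "'a \<Rightarrow> real \<Rightarrow> real" and R :: real
    assume "\<And>c. c \<in> Basis \<Longrightarrow> sm1 (g c)" "\<And>c y. c \<in> Basis \<Longrightarrow> R \<le> \<bar>y\<bar> \<Longrightarrow> g c y = 0"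
    then have t: "test_fun (pprod g)" by (intro pprod_test) auto
    have "(\<integral>x. (g1 x - g2 x) * pprod g x \<partial>lebesgue)
        = (\<integral>x. g1 x * pprod g x - g2 x * pprod g x \<partial>lebesgue)"
      by (simp add: algebra_simps)
    also have "\<dots> = (\<integral>x. g1 x * pprod g x \<partial>lebesgue) - (\<integral>x. g2 x * pprod g x \<partial>lebesgue)"
      by (rule Bochner_Integration.integral_diff) (use L2_mult_test[OF g1 t] L2_mult_test[OF g2 t] in auto)
    also have "\<dots> = 0"
      using w1 w2 t unfolding weak_partial_def by (metis add.inverse_inverse cancel_comm_monoid_add_class.diff_cancel)
    finally show "(\<integral>x. (g1 x - g2 x) * pprod g x \<partial>lebesgue) = 0" .
  qed
  then show ?thesis by (rule eventually_mono) simp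
qed

lemma weak_grad_spec:
  assumes "H1 u" "b \<in> Basis"
  shows "L2 (weak_grad u b)" "weak_partial u b (weak_grad u b)"
proof -
  have "\<exists>g. L2 g \<and> weak_partial u b g" using assms unfolding H1_def by blast
  then have "L2 (weak_grad u b) \<and> weak_partial u b (weak_grad u b)"
    unfolding weak_grad_def by (rule someI_ex)
  then show "L2 (weak_grad u b)" "weak_partial u b (weak_grad u b)" by auto
qed

lemma grad_sq_int:
  assumes "H1 u"
  shows "integrable lebesgue (grad_sq u)"
proof -
  have "integrable lebesgue (\<lambda>x. \<Sum>b\<in>Basis. (weak_grad u b x)\<^sup>2)"
  proof (rule Bochner_Integration.integrable_sum)
    fix b :: 'a assume "b \<in> Basis"
    then show "integrable lebesgue (\<lambda>x. (weak_grad u b x)\<^sup>2)"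
      using weak_grad_spec(1)[OF assms] unfolding L2_def by blast
  qed
  then show ?thesis unfolding grad_sq_def[abs_def] .
qed

lemma grad_sq_nonneg: "0 \<le> grad_sq u x"
  unfolding grad_sq_def by (intro sum_nonneg) auto

lemma L2_cmult: "L2 f \<Longrightarrow> L2 (\<lambda>x. c * f x)"
  unfolding L2_def by (auto simp: power_mult_distrib intro!: borel_measurable_times)

lemma L2_scale:
  fixes u :: "'a::euclidean_space \<Rightarrow> real"
  assumes u: "L2 u" and s: "s \<noteq> 0"
  shows "L2 (\<lambda>x. u (s *\<^sub>R x))" "L2_norm_sq (\<lambda>x. u (s *\<^sub>R x)) = L2_norm_sq u / \<bar>s\<bar> ^ DIM('a)"
proof -
  have um: "u \<in> borel_measurable lebesgue" and ui: "integrable lebesgue (\<lambda>x. (u x)\<^sup>2)"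
    using u unfolding L2_def by auto
  have u2m: "(\<lambda>x. (u x)\<^sup>2) \<in> borel_measurable lebesgue" using um by (rule borel_measurable_power)
  show "L2 (\<lambda>x. u (s *\<^sub>R x))" unfolding L2_def
    using meas_scale[OF um] lebesgue_scale(1)[OF u2m s] ui by simp
  show "L2_norm_sq (\<lambda>x. u (s *\<^sub>R x)) = L2_norm_sq u / \<bar>s\<bar> ^ DIM('a)"
    unfolding L2_norm_sq_def using lebesgue_scale(2)[OF u2m s] by simp
qed

lemma weak_partial_scale:
  fixes u :: "'a::euclidean_space \<Rightarrow> real"
  assumes u: "L2 u" and g: "L2 g" and w: "weak_partial u b g" and s: "s \<noteq> 0"
  shows "weak_partial (\<lambda>x. u (s *\<^sub>R x)) b (\<lambda>x. s * g (s *\<^sub>R x))"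
  unfolding weak_partial_def
proof (intro allI impI)
  fix \<phi> :: "'a \<Rightarrow> real" assume t: "test_fun \<phi>"
  define \<phi>' where "\<phi>' = (\<lambda>y. \<phi> ((1/s) *\<^sub>R y))"
  have s': "1/s \<noteq> 0" using s by simp
  have t': "test_fun \<phi>'" unfolding \<phi>'_def by (rule test_scale(1)[OF t s'])
  have D: "frechet_derivative \<phi>' (at y) b = (1/s) * frechet_derivative \<phi> (at ((1/s) *\<^sub>R y)) b" for y
    unfolding \<phi>'_def by (rule test_scale(2)[OF t s'])
  have e1: "frechet_derivative \<phi> (at x) b = s * frechet_derivative \<phi>' (at (s *\<^sub>R x)) b" for x
    using D[of "s *\<^sub>R x"] s by simp
  have e2: "\<phi> x = \<phi>' (s *\<^sub>R x)" for x unfolding \<phi>'_def using s by simp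
  have um: "u \<in> borel_measurable lebesgue" using u unfolding L2_def by blast
  have gm: "g \<in> borel_measurable lebesgue" using g unfolding L2_def by blast
  have Dm: "(\<lambda>y. frechet_derivative \<phi>' (at y) b) \<in> borel_measurable lebesgue"
    by (rule cont_meas[OF test_dcont[OF t']])
  have pm: "\<phi>' \<in> borel_measurable lebesgue" by (rule cont_meas[OF test_cont[OF t']])
  define H where "H = (\<lambda>y. s * (u y * frechet_derivative \<phi>' (at y) b))"
  define K where "K = (\<lambda>y. s * (g y * \<phi>' y))"
  have Hm: "H \<in> borel_measurable lebesgue" unfolding H_def using um Dm by measurable
  have Km: "K \<in> borel_measurable lebesgue" unfolding K_def using gm pm by measurable
  have wp: "(\<integral>y. u y * frechet_derivative \<phi>' (at y) b \<partial>lebesgue) = - (\<integral>y. g y * \<phi>' y \<partial>lebesgue)"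
    using w t' unfolding weak_partial_def by blast
  have "(\<integral>x. u (s *\<^sub>R x) * frechet_derivative \<phi> (at x) b \<partial>lebesgue) = (\<integral>x. H (s *\<^sub>R x) \<partial>lebesgue)"
    unfolding H_def e1 by (rule Bochner_Integration.integral_cong) auto
  also have "\<dots> = (\<integral>x. H x \<partial>lebesgue) / \<bar>s\<bar> ^ DIM('a)" by (rule lebesgue_scale(2)[OF Hm s])
  also have "(\<integral>x. H x \<partial>lebesgue) = s * - (\<integral>y. g y * \<phi>' y \<partial>lebesgue)"
    unfolding H_def wp[symmetric] by simp
  also have "s * - (\<integral>y. g y * \<phi>' y \<partial>lebesgue) = - (\<integral>x. K x \<partial>lebesgue)"
    unfolding K_def by simp
  also have "(\<integral>x. K x \<partial>lebesgue) = (\<integral>x. K (s *\<^sub>R x) \<partial>lebesgue) * \<bar>s\<bar> ^ DIM('a)"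
    using lebesgue_scale(2)[OF Km s] s by simp
  also have "(\<integral>x. K (s *\<^sub>R x) \<partial>lebesgue) = (\<integral>x. s * g (s *\<^sub>R x) * \<phi> x \<partial>lebesgue)"
    unfolding K_def e2 by (rule Bochner_Integration.integral_cong) auto
  finally show "(\<integral>x. u (s *\<^sub>R x) * frechet_derivative \<phi> (at x) b \<partial>lebesgue) = - (\<integral>x. s * g (s *\<^sub>R x) * \<phi> x \<partial>lebesgue)"
    using s by simp
qed

lemma H1_scale:
  fixes u :: "'a::euclidean_space \<Rightarrow> real"
  assumes u: "H1 u" and s: "s \<noteq> 0"
  shows "H1 (\<lambda>x. u (s *\<^sub>R x))"
  unfolding H1_def
proof
  have uL: "L2 u" using u unfolding H1_def by blast
  show "L2 (\<lambda>x. u (s *\<^sub>R x))" by (rule L2_scale(1)[OF uL s])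
  show "\<forall>b\<in>Basis. \<exists>g. L2 g \<and> weak_partial (\<lambda>x. u (s *\<^sub>R x)) b g"
  proof
    fix b :: 'a assume b: "b \<in> Basis"
    show "\<exists>g. L2 g \<and> weak_partial (\<lambda>x. u (s *\<^sub>R x)) b g"
      by (rule exI[of _ "\<lambda>x. s * weak_grad u b (s *\<^sub>R x)"])
        (use weak_partial_scale[OF uL weak_grad_spec[OF u b] s] L2_cmult L2_scale(1)[OF weak_grad_spec(1)[OF u b] s] in blast)
  qed
qed

lemma grad_sq_scale:
  fixes u :: "'a::euclidean_space \<Rightarrow> real"
  assumes u: "H1 u" and s: "s \<noteq> 0"
  shows "AE x in lebesgue. grad_sq (\<lambda>x. u (s *\<^sub>R x)) x = s\<^sup>2 * grad_sq u (s *\<^sub>R x)"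
proof -
  have uL: "L2 u" using u unfolding H1_def by blast
  have us: "H1 (\<lambda>x. u (s *\<^sub>R x))" by (rule H1_scale[OF u s])
  have "\<forall>b\<in>Basis. AE x in lebesgue. weak_grad (\<lambda>x. u (s *\<^sub>R x)) b x = s * weak_grad u b (s *\<^sub>R x)"
  proof
    fix b :: 'a assume b: "b \<in> Basis"
    show "AE x in lebesgue. weak_grad (\<lambda>x. u (s *\<^sub>R x)) b x = s * weak_grad u b (s *\<^sub>R x)"
    proof (rule weak_unique)
      show "L2 (weak_grad (\<lambda>x. u (s *\<^sub>R x)) b)" by (rule weak_grad_spec(1)[OF us b])
      show "weak_partial (\<lambda>x. u (s *\<^sub>R x)) b (weak_grad (\<lambda>x. u (s *\<^sub>R x)) b)" by (rule weak_grad_spec(2)[OF us b])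
      show "L2 (\<lambda>x. s * weak_grad u b (s *\<^sub>R x))"
        by (rule L2_cmult[OF L2_scale(1)[OF weak_grad_spec(1)[OF u b] s]])
      show "weak_partial (\<lambda>x. u (s *\<^sub>R x)) b (\<lambda>x. s * weak_grad u b (s *\<^sub>R x))"
        by (rule weak_partial_scale[OF uL weak_grad_spec[OF u b] s])
    qed
  qed
  then have "AE x in lebesgue. \<forall>b\<in>Basis. weak_grad (\<lambda>x. u (s *\<^sub>R x)) b x = s * weak_grad u b (s *\<^sub>R x)"
    by (rule eventually_ball_finite[OF finite_Basis])
  then show ?thesis
  proof (rule eventually_mono)
    fix x assume A: "\<forall>b\<in>Basis. weak_grad (\<lambda>x. u (s *\<^sub>R x)) b x = s * weak_grad u b (s *\<^sub>R x)"
    have "grad_sq (\<lambda>x. u (s *\<^sub>R x)) x = (\<Sum>b\<in>Basis. (s * weak_grad u b (s *\<^sub>R x))\<^sup>2)"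
      unfolding grad_sq_def by (rule sum.cong) (use A in auto)
    also have "\<dots> = s\<^sup>2 * grad_sq u (s *\<^sub>R x)"
      unfolding grad_sq_def by (simp add: sum_distrib_left power_mult_distrib)
    finally show "grad_sq (\<lambda>x. u (s *\<^sub>R x)) x = s\<^sup>2 * grad_sq u (s *\<^sub>R x)" .
  qed
qed

lemma pprod_upd:
  assumes b: "b \<in> Basis"
  shows "pprod (g(b := f)) x = f (x \<bullet> b) * (\<Prod>c\<in>Basis - {b}. g c (x \<bullet> c))"
proof -
  have "pprod (g(b := f)) x = (g(b := f)) b (x \<bullet> b) * (\<Prod>c\<in>Basis - {b}. (g(b := f)) c (x \<bullet> c))"
    unfolding pprod_def using b by (subst prod.remove[of _ b]) auto
  also have "(\<Prod>c\<in>Basis - {b}. (g(b := f)) c (x \<bullet> c)) = (\<Prod>c\<in>Basis - {b}. g c (x \<bullet> c))"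
    by (rule prod.cong) auto
  finally show ?thesis by (simp only: fun_upd_same)
qed

lemma pprod_remove:
  assumes b: "b \<in> Basis"
  shows "pprod g x = g b (x \<bullet> b) * (\<Prod>c\<in>Basis - {b}. g c (x \<bullet> c))"
  using pprod_upd[OF b, of g "g b" x] by simp

lemma shift_step:
  fixes u :: "'a::euclidean_space \<Rightarrow> real"
  assumes u: "L2 u" and Z: "\<And>\<phi>. test_fun \<phi> \<Longrightarrow> (\<integral>x. u x * frechet_derivative \<phi> (at x) b \<partial>lebesgue) = 0"
    and b: "b \<in> Basis"
    and g: "\<And>c. c \<in> Basis \<Longrightarrow> sm1 (g c)"
    and gs: "\<And>c y. c \<in> Basis \<Longrightarrow> R \<le> \<bar>y\<bar> \<Longrightarrow> g c y = 0"
    and R: "R \<ge> 0" and h: "h > 0"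
  shows "(\<integral>x. u x * pprod g x \<partial>lebesgue) = (\<integral>x. u x * pprod (g(b := (\<lambda>y. g b (y - h)))) x \<partial>lebesgue)"
proof -
  let ?\<chi> = "g b"
  define A where "A = (\<lambda>y. integral {-R-1..y} ?\<chi>)"
  have A: "\<And>x. (A has_real_derivative ?\<chi> x) (at x)" "\<And>y. y \<le> -R \<Longrightarrow> A y = 0" "\<And>y. y \<ge> R \<Longrightarrow> A y = A R"
    unfolding A_def by (rule sm1_antideriv[OF g[OF b] R gs[OF b]]; simp)+
  define \<Psi> where "\<Psi> = (\<lambda>y. A y - A (y - h))"
  have \<Psi>d: "(\<Psi> has_real_derivative (?\<chi> y - ?\<chi> (y - h))) (at y)" for y
  proof -
    have "((\<lambda>y. A (y - h)) has_real_derivative ?\<chi> (y - h) * 1) (at y)"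
      by (rule DERIV_chain2[OF A(1)]) (auto intro!: derivative_eq_intros)
    then show ?thesis unfolding \<Psi>_def by (intro DERIV_diff A(1)) simp
  qed
  have sm\<chi>h: "sm1 (\<lambda>y. ?\<chi> y - ?\<chi> (y - h))"
  proof -
    have "sm1 (\<lambda>y. ?\<chi> (1 * y + - h))" by (rule sm1_affine[OF g[OF b]])
    then have "sm1 (\<lambda>y. ?\<chi> (y - h))" by simp
    then show ?thesis by (rule sm1_diff[OF g[OF b]])
  qed
  have sm\<Psi>: "sm1 \<Psi>" by (rule sm1_I[OF \<Psi>d sm\<chi>h])
  have \<Psi>s: "\<Psi> y = 0" if "R + h \<le> \<bar>y\<bar>" for y
  proof (cases "y \<ge> 0")
    case True
    then have y1: "y \<ge> R" and y2: "y - h \<ge> R" using that h by auto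
    have "A y = A R" by (rule A(3)[OF y1])
    moreover have "A (y - h) = A R" by (rule A(3)[OF y2])
    ultimately show ?thesis unfolding \<Psi>_def by simp
  next
    case False
    then have y1: "y \<le> -R" and y2: "y - h \<le> -R" using that h by auto
    have "A y = 0" by (rule A(2)[OF y1])
    moreover have "A (y - h) = 0" by (rule A(2)[OF y2])
    ultimately show ?thesis unfolding \<Psi>_def by simp
  qed
  have dP: "deriv \<Psi> y = ?\<chi> y - ?\<chi> (y - h)" for y by (rule DERIV_imp_deriv[OF \<Psi>d])
  define G where "G = g(b := \<Psi>)"
  have Gsm: "sm1 (G c)" if "c \<in> Basis" for c unfolding G_def using g[OF that] sm\<Psi> by auto
  have Gs: "G c y = 0" if "c \<in> Basis" "R + h \<le> \<bar>y\<bar>" for c y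
    unfolding G_def using gs[OF that(1)] \<Psi>s that h by auto
  have tG: "test_fun (pprod G)" by (rule pprod_test[OF Gsm Gs]) auto
  let ?g' = "g(b := (\<lambda>y. g b (y - h)))"
  have tg: "test_fun (pprod g)" by (rule pprod_test[OF g gs]) auto
  have tg': "test_fun (pprod ?g')"
  proof (rule pprod_test)
    fix c :: 'a assume c: "c \<in> Basis"
    show "sm1 (?g' c)" using g[OF c] sm1_affine[OF g[OF b], of 1 "-h"] by auto
  next
    fix c :: 'a and y :: real assume c: "c \<in> Basis" and y: "R + h \<le> \<bar>y\<bar>"
    then have "R \<le> \<bar>y - h\<bar>" "R \<le> \<bar>y\<bar>" using h R by auto
    then show "?g' c y = 0" using gs c b by auto
  qed
  have fr: "frechet_derivative (pprod G) (at x) b = pprod g x - pprod ?g' x" for x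
  proof -
    have "frechet_derivative (pprod G) (at x) b = deriv (G b) (x \<bullet> b) * (\<Prod>j\<in>Basis - {b}. G j (x \<bullet> j))"
      by (rule pprod_frechet_Basis[OF Gsm b])
    also have "(\<Prod>j\<in>Basis - {b}. G j (x \<bullet> j)) = (\<Prod>j\<in>Basis - {b}. g j (x \<bullet> j))"
      unfolding G_def by (rule prod.cong) auto
    also have "deriv (G b) (x \<bullet> b) = ?\<chi> (x \<bullet> b) - ?\<chi> (x \<bullet> b - h)" unfolding G_def using dP by simp
    finally show ?thesis
      using pprod_remove[OF b, of g x] pprod_upd[OF b, of g "\<lambda>y. g b (y - h)" x] by (simp add: algebra_simps)
  qed
  have "0 = (\<integral>x. u x * frechet_derivative (pprod G) (at x) b \<partial>lebesgue)" using Z[OF tG] by simp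
  also have "\<dots> = (\<integral>x. u x * pprod g x - u x * pprod ?g' x \<partial>lebesgue)"
    unfolding fr by (simp add: algebra_simps)
  also have "\<dots> = (\<integral>x. u x * pprod g x \<partial>lebesgue) - (\<integral>x. u x * pprod ?g' x \<partial>lebesgue)"
    by (rule Bochner_Integration.integral_diff[OF L2_mult_test[OF u tg] L2_mult_test[OF u tg']])
  finally show ?thesis by simp
qed

lemma shift_supp:
  fixes g :: "'a::euclidean_space \<Rightarrow> real \<Rightarrow> real" and y t R :: real
  assumes gs: "\<And>c y. c \<in> Basis \<Longrightarrow> R \<le> \<bar>y\<bar> \<Longrightarrow> g c y = 0" and t: "t \<ge> 0" and c: "c \<in> Basis"
    and y: "R + t \<le> \<bar>y\<bar>"
  shows "(g(b := (\<lambda>y. g b (y - t)))) c y = 0"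
proof -
  have "R \<le> \<bar>y - t\<bar>"
  proof (cases "y \<ge> 0")
    case True then have "\<bar>y\<bar> = y" by simp
    then show ?thesis using y t abs_ge_self[of "y - t"] by linarith
  next
    case False then have "\<bar>y\<bar> = - y" by simp
    then show ?thesis using y t abs_ge_minus_self[of "y - t"] by linarith
  qed
  moreover have "R \<le> \<bar>y\<bar>" using y t by linarith
  ultimately show ?thesis using gs c by (cases "c = b") auto
qed

lemma shift_sm1:
  assumes g: "\<And>c. c \<in> Basis \<Longrightarrow> sm1 (g c)" and b: "b \<in> Basis" and c: "c \<in> Basis"
  shows "sm1 ((g(b := (\<lambda>y. g b (y - t)))) c)"
proof -
  have "sm1 (\<lambda>y. g b (1 * y + - t))" by (rule sm1_affine[OF g[OF b]])
  then show ?thesis using g[OF c] by (cases "c = b") auto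
qed

lemma shift_k:
  fixes u :: "'a::euclidean_space \<Rightarrow> real"
  assumes u: "L2 u" and Z: "\<And>\<phi>. test_fun \<phi> \<Longrightarrow> (\<integral>x. u x * frechet_derivative \<phi> (at x) b \<partial>lebesgue) = 0"
    and b: "b \<in> Basis"
    and g: "\<And>c. c \<in> Basis \<Longrightarrow> sm1 (g c)"
    and gs: "\<And>c y. c \<in> Basis \<Longrightarrow> R \<le> \<bar>y\<bar> \<Longrightarrow> g c y = 0"
    and R: "R \<ge> 0" and h: "h > 0"
  shows "(\<integral>x. u x * pprod g x \<partial>lebesgue) = (\<integral>x. u x * pprod (g(b := (\<lambda>y. g b (y - real k * h)))) x \<partial>lebesgue)"
proof (induction k)
  case 0
  have "g(b := (\<lambda>y. g b (y - real 0 * h))) = g" by (simp add: fun_eq_iff)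
  then show ?case by simp
next
  case (Suc k)
  define gk where "gk = g(b := (\<lambda>y. g b (y - real k * h)))"
  have kh: "real k * h \<ge> 0" using h by simp
  have "(\<integral>x. u x * pprod gk x \<partial>lebesgue) = (\<integral>x. u x * pprod (gk(b := (\<lambda>y. gk b (y - h)))) x \<partial>lebesgue)"
  proof (rule shift_step[OF u Z b])
    show "\<And>c. c \<in> Basis \<Longrightarrow> sm1 (gk c)" unfolding gk_def by (rule shift_sm1[OF g b])
    show "\<And>c y. c \<in> Basis \<Longrightarrow> R + real k * h \<le> \<bar>y\<bar> \<Longrightarrow> gk c y = 0"
      unfolding gk_def by (rule shift_supp[OF gs kh])
    show "0 \<le> R + real k * h" using R kh by simp
  qed (use h in auto)
  note step = this
  have e2: "gk(b := (\<lambda>y. gk b (y - h))) = g(b := (\<lambda>y. g b (y - real (Suc k) * h)))"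
    unfolding gk_def by (simp add: fun_eq_iff algebra_simps)
  from Suc.IH have "(\<integral>x. u x * pprod g x \<partial>lebesgue) = (\<integral>x. u x * pprod gk x \<partial>lebesgue)"
    unfolding gk_def .
  also have "\<dots> = (\<integral>x. u x * pprod (gk(b := (\<lambda>y. gk b (y - h)))) x \<partial>lebesgue)" by (rule step)
  also have "\<dots> = (\<integral>x. u x * pprod (g(b := (\<lambda>y. g b (y - real (Suc k) * h)))) x \<partial>lebesgue)"
    by (simp only: e2)
  finally show ?case .
qed

lemma lebesgue_translate:
  fixes f :: "'a::euclidean_space \<Rightarrow> real"
  assumes f: "f \<in> borel_measurable lebesgue"
  shows "(\<integral>x. f (x + t) \<partial>lebesgue) = (\<integral>x. f x \<partial>lebesgue)"
proof -
  define T where "T = (\<lambda>x::'a. t + (\<Sum>j\<in>Basis. (1 * (x \<bullet> j)) *\<^sub>R j))"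
  have T: "T = (\<lambda>x. x + t)"
    unfolding T_def by (simp add: fun_eq_iff euclidean_representation)
  have L: "lebesgue = density (distr lebesgue lebesgue T) (\<lambda>_. 1)"
  proof -
    have "lebesgue = density (distr lebesgue lebesgue T) (\<lambda>_. ennreal (\<Prod>j\<in>(Basis::'a set). \<bar>1\<bar>))"
      unfolding T_def by (rule lebesgue_affine_euclidean) simp
    then show ?thesis by simp
  qed
  have Tm: "T \<in> lebesgue \<rightarrow>\<^sub>M lebesgue" unfolding T_def by (rule lebesgue_affine_measurable) simp
  have fm: "f \<in> borel_measurable (distr lebesgue lebesgue T)" using f by simp
  have "(\<integral>x. f x \<partial>lebesgue) = (\<integral>x. f x \<partial>density (distr lebesgue lebesgue T) (\<lambda>_. 1))"
    by (subst L) (rule refl)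
  also have "\<dots> = (\<integral>x. 1 *\<^sub>R f x \<partial>distr lebesgue lebesgue T)"
    by (rule integral_density[where g="\<lambda>_. 1", simplified ennreal_1]) (use fm in auto)
  also have "\<dots> = (\<integral>x. 1 *\<^sub>R f (T x) \<partial>lebesgue)"
    by (rule integral_distr) (use Tm f in auto)
  finally show ?thesis unfolding T by simp
qed

lemma test_L2:
  fixes \<phi> :: "'a::euclidean_space \<Rightarrow> real"
  assumes t: "test_fun \<phi>"
  shows "L2 \<phi>"
  unfolding L2_def
proof
  show pm: "\<phi> \<in> borel_measurable lebesgue" by (rule cont_meas[OF test_cont[OF t]])
  obtain B where B: "\<And>x. \<bar>\<phi> x\<bar> \<le> B" using test_bounded[OF t] by blast
  obtain R where R: "\<And>x. norm x > R \<Longrightarrow> \<phi> x = 0" using test_zero_outside[OF t] by blast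
  have cm: "cbox (- R *\<^sub>R One) (R *\<^sub>R One) \<in> fmeasurable lebesgue" using lmeasurable_cbox by blast
  have i1: "integrable lebesgue (indicator (cbox (- R *\<^sub>R One) (R *\<^sub>R One)) :: 'a \<Rightarrow> real)"
    using cm by (intro integrable_real_indicator) (auto simp: fmeasurable_def)
  show "integrable lebesgue (\<lambda>x. (\<phi> x)\<^sup>2)"
  proof (rule Bochner_Integration.integrable_bound[where f="\<lambda>x. B\<^sup>2 * indicator (cbox (- R *\<^sub>R One) (R *\<^sub>R One)) x"])
    show "integrable lebesgue (\<lambda>x. B\<^sup>2 * indicator (cbox (- R *\<^sub>R One) (R *\<^sub>R One)) x)"
      by (intro integrable_mult_right integrable_real_indicator) (use cm in \<open>auto simp: fmeasurable_def\<close>)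
    show "(\<lambda>x. (\<phi> x)\<^sup>2) \<in> borel_measurable lebesgue" using pm by (rule borel_measurable_power)
    show "AE x in lebesgue. norm ((\<phi> x)\<^sup>2) \<le> norm (B\<^sup>2 * indicator (cbox (- R *\<^sub>R One) (R *\<^sub>R One)) x)"
    proof (rule AE_I2)
      fix x
      show "norm ((\<phi> x)\<^sup>2) \<le> norm (B\<^sup>2 * indicator (cbox (- R *\<^sub>R One) (R *\<^sub>R One)) x)"
      proof (cases "norm x > R")
        case True then show ?thesis using R by simp
      next
        case False
        then have "x \<in> cbox (- R *\<^sub>R One) (R *\<^sub>R One)" using norm_le_cbox[of x R] by simp
        moreover have "(\<phi> x)\<^sup>2 \<le> B\<^sup>2"
          using power_mono[OF B[of x] abs_ge_zero, of 2] by simp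
        ultimately show ?thesis by simp
      qed
    qed
  qed
qed

lemma sum_sq_disjoint:
  fixes a :: "nat \<Rightarrow> real"
  assumes "\<And>j k. j \<in> I \<Longrightarrow> k \<in> I \<Longrightarrow> j \<noteq> k \<Longrightarrow> a j * a k = 0" "finite I"
  shows "(\<Sum>k\<in>I. a k)\<^sup>2 = (\<Sum>k\<in>I. (a k)\<^sup>2)"
proof -
  have "(\<Sum>k\<in>I. a k)\<^sup>2 = (\<Sum>j\<in>I. \<Sum>k\<in>I. a j * a k)"
    by (simp add: power2_eq_square sum_product)
  also have "\<dots> = (\<Sum>j\<in>I. (a j)\<^sup>2)"
  proof (rule sum.cong[OF refl])
    fix j assume j: "j \<in> I"
    have "(\<Sum>k\<in>I. a j * a k) = a j * a j + (\<Sum>k\<in>I - {j}. a j * a k)"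
      using j assms(2) by (subst sum.remove[of _ j]) auto
    also have "(\<Sum>k\<in>I - {j}. a j * a k) = 0"
      by (rule sum.neutral) (use assms(1) j in auto)
    finally show "(\<Sum>k\<in>I. a j * a k) = (a j)\<^sup>2" by (simp add: power2_eq_square)
  qed
  finally show ?thesis .
qed

lemma young2:
  fixes a b e :: real
  assumes e: "e > 0"
  shows "\<bar>a * b\<bar> \<le> (e * a\<^sup>2 + b\<^sup>2 / e) / 2"
proof -
  have "0 \<le> (e * \<bar>a\<bar> - \<bar>b\<bar>)\<^sup>2" by simp
  then have "2 * e * (\<bar>a\<bar> * \<bar>b\<bar>) \<le> e\<^sup>2 * a\<^sup>2 + b\<^sup>2"
    by (simp add: power2_eq_square algebra_simps)
  then have le: "\<bar>a * b\<bar> \<le> (e\<^sup>2 * a\<^sup>2 + b\<^sup>2) / (2 * e)"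
    using e by (simp add: pos_le_divide_eq abs_mult mult_ac)
  have eq: "(e * a\<^sup>2 + b\<^sup>2 / e) / 2 = (e\<^sup>2 * a\<^sup>2 + b\<^sup>2) / (2 * e)"
    using e by (simp add: field_simps power2_eq_square)
  show ?thesis unfolding eq by (rule le)
qed

lemma zero_grad_prod:
  fixes u :: "'a::euclidean_space \<Rightarrow> real" and g :: "'a \<Rightarrow> real \<Rightarrow> real"
  assumes u: "L2 u"
    and Z: "\<And>\<phi> b. test_fun \<phi> \<Longrightarrow> b \<in> Basis \<Longrightarrow> (\<integral>x. u x * frechet_derivative \<phi> (at x) b \<partial>lebesgue) = 0"
    and g: "\<And>c. c \<in> Basis \<Longrightarrow> sm1 (g c)"
    and gs: "\<And>c y. c \<in> Basis \<Longrightarrow> R \<le> \<bar>y\<bar> \<Longrightarrow> g c y = 0"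
  shows "(\<integral>x. u x * pprod g x \<partial>lebesgue) = 0"
proof -
  obtain b :: 'a where b: "b \<in> Basis" using nonempty_Basis by blast
  define R0 where "R0 = max R 0"
  have R0: "R0 \<ge> 0" unfolding R0_def by simp
  have gs0: "g c y = 0" if "c \<in> Basis" "R0 \<le> \<bar>y\<bar>" for c y
    using gs[OF that(1)] that(2) unfolding R0_def by simp
  define h where "h = 2 * R0 + 1"
  have h: "h > 0" unfolding h_def using R0 by simp
  define \<phi> where "\<phi> = (\<lambda>k::nat. pprod (g(b := (\<lambda>y. g b (y - real k * h)))))"
  define c where "c = (\<integral>x. u x * pprod g x \<partial>lebesgue)"
  have t\<phi>: "test_fun (\<phi> k)" for k
  proof -
    have kh: "real k * h \<ge> 0" using h by simp
    show ?thesis unfolding \<phi>_def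
      by (rule pprod_test[OF shift_sm1[OF g b] shift_supp[OF gs0 kh]]) auto
  qed
  have tg: "test_fun (pprod g)" by (rule pprod_test[OF g gs]) auto
  have Ik: "(\<integral>x. u x * \<phi> k x \<partial>lebesgue) = c" for k
    unfolding c_def \<phi>_def by (rule shift_k[OF u Z[OF _ b] b g gs0 R0 h, symmetric])
  have \<phi>x: "\<phi> k x = g b (x \<bullet> b - real k * h) * (\<Prod>c\<in>Basis - {b}. g c (x \<bullet> c))" for k x
    unfolding \<phi>_def by (rule pprod_upd[OF b])
  have disj: "\<phi> j x * \<phi> k x = 0" if "j \<noteq> k" for j k x
  proof (rule ccontr)
    assume "\<phi> j x * \<phi> k x \<noteq> 0"
    then have "g b (x \<bullet> b - real j * h) \<noteq> 0" "g b (x \<bullet> b - real k * h) \<noteq> 0" unfolding \<phi>x by auto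
    then have a1: "\<bar>x \<bullet> b - real j * h\<bar> < R0" and a2: "\<bar>x \<bullet> b - real k * h\<bar> < R0"
      using gs0[OF b] by (meson not_le)+
    have "\<bar>real j * h - real k * h\<bar> < 2 * R0" using a1 a2 by linarith
    moreover have "\<bar>real j * h - real k * h\<bar> = \<bar>real j - real k\<bar> * h"
      using h by (simp add: left_diff_distrib[symmetric] abs_mult)
    moreover have "\<bar>real j - real k\<bar> \<ge> 1" using that by linarith
    ultimately have "h < 2 * R0" using h by (smt (verit) mult_le_cancel_right1)
    then show False unfolding h_def by simp
  qed
  have trans: "\<phi> k x = pprod g (x + (- (real k * h)) *\<^sub>R b)" for k x
  proof -
    have "pprod g (x + (- (real k * h)) *\<^sub>R b) = g b ((x + (- (real k * h)) *\<^sub>R b) \<bullet> b)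
        * (\<Prod>c\<in>Basis - {b}. g c ((x + (- (real k * h)) *\<^sub>R b) \<bullet> c))"
      by (rule pprod_remove[OF b])
    also have "(x + (- (real k * h)) *\<^sub>R b) \<bullet> b = x \<bullet> b - real k * h"
      using b by (simp add: inner_add_left inner_diff_left inner_Basis)
    also have "(\<Prod>c\<in>Basis - {b}. g c ((x + (- (real k * h)) *\<^sub>R b) \<bullet> c)) = (\<Prod>c\<in>Basis - {b}. g c (x \<bullet> c))"
      by (rule prod.cong) (use b in \<open>auto simp: inner_add_left inner_diff_left inner_Basis\<close>)
    finally show ?thesis unfolding \<phi>x by simp
  qed
  have pgm: "(\<lambda>y. (pprod g y)\<^sup>2) \<in> borel_measurable lebesgue"
    using cont_meas[OF test_cont[OF tg]] by (rule borel_measurable_power)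
  define P0 where "P0 = (\<integral>x. (pprod g x)\<^sup>2 \<partial>lebesgue)"
  define U where "U = (\<integral>x. (u x)\<^sup>2 \<partial>lebesgue)"
  have Pk: "(\<integral>x. (\<phi> k x)\<^sup>2 \<partial>lebesgue) = P0" for k
    unfolding trans P0_def using lebesgue_translate[OF pgm, of "(- (real k * h)) *\<^sub>R b"] by simp
  have L2\<phi>: "integrable lebesgue (\<lambda>x. (\<phi> k x)\<^sup>2)" for k using test_L2[OF t\<phi>] unfolding L2_def by blast
  have L2u: "integrable lebesgue (\<lambda>x. (u x)\<^sup>2)" using u unfolding L2_def by blast
  have bound: "real n * \<bar>c\<bar> \<le> sqrt (real n) * ((U + P0) / 2)" if n: "n > 0" for n :: nat
  proof -
    define S where "S = (\<lambda>x. \<Sum>k<n. \<phi> k x)"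
    define e where "e = sqrt (real n)"
    have e: "e > 0" unfolding e_def using n by simp
    have ee: "e * e = real n" unfolding e_def by simp
    have iuS: "integrable lebesgue (\<lambda>x. u x * S x)"
      unfolding S_def sum_distrib_left by (intro Bochner_Integration.integrable_sum L2_mult_test[OF u t\<phi>])
    have uS: "(\<integral>x. u x * S x \<partial>lebesgue) = real n * c"
    proof -
      have "(\<integral>x. u x * S x \<partial>lebesgue) = (\<integral>x. (\<Sum>k<n. u x * \<phi> k x) \<partial>lebesgue)"
        unfolding S_def by (simp add: sum_distrib_left)
      also have "\<dots> = (\<Sum>k<n. \<integral>x. u x * \<phi> k x \<partial>lebesgue)"
        by (rule Bochner_Integration.integral_sum) (rule L2_mult_test[OF u t\<phi>])
      also have "\<dots> = real n * c" using Ik by simp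
      finally show ?thesis .
    qed
    have S2: "(S x)\<^sup>2 = (\<Sum>k<n. (\<phi> k x)\<^sup>2)" for x
      unfolding S_def by (rule sum_sq_disjoint) (use disj in auto)
    have iS2: "integrable lebesgue (\<lambda>x. (S x)\<^sup>2)"
      unfolding S2 by (intro Bochner_Integration.integrable_sum L2\<phi>)
    have intS2: "(\<integral>x. (S x)\<^sup>2 \<partial>lebesgue) = real n * P0"
    proof -
      have "(\<integral>x. (S x)\<^sup>2 \<partial>lebesgue) = (\<Sum>k<n. \<integral>x. (\<phi> k x)\<^sup>2 \<partial>lebesgue)"
        unfolding S2 by (rule Bochner_Integration.integral_sum) (rule L2\<phi>)
      also have "\<dots> = real n * P0" using Pk by simp
      finally show ?thesis .
    qed
    have iR: "integrable lebesgue (\<lambda>x. (e * (u x)\<^sup>2 + (S x)\<^sup>2 / e) / 2)"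
      using L2u iS2 by (intro integrable_divide Bochner_Integration.integrable_add integrable_mult_right) auto
    have "norm (\<integral>x. u x * S x \<partial>lebesgue) \<le> (\<integral>x. (e * (u x)\<^sup>2 + (S x)\<^sup>2 / e) / 2 \<partial>lebesgue)"
      by (rule Bochner_Integration.integral_norm_bound_integral[OF iuS iR]) (use young2[OF e] in simp)
    also have "\<dots> = (e * U + real n * P0 / e) / 2"
    proof -
      have "(\<integral>x. (e * (u x)\<^sup>2 + (S x)\<^sup>2 / e) / 2 \<partial>lebesgue)
          = ((\<integral>x. e * (u x)\<^sup>2 \<partial>lebesgue) + (\<integral>x. (S x)\<^sup>2 / e \<partial>lebesgue)) / 2"
        using L2u iS2 by (simp add: Bochner_Integration.integral_add)
      also have "\<dots> = (e * U + real n * P0 / e) / 2" unfolding U_def using intS2 by simp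
      finally show ?thesis .
    qed
    also have "\<dots> = e * ((U + P0) / 2)"
    proof -
      have "real n * P0 / e = e * P0" using e ee by (simp add: field_simps)
      then show ?thesis by (simp add: algebra_simps)
    qed
    finally show ?thesis unfolding uS e_def by (simp add: abs_mult)
  qed
  show "(\<integral>x. u x * pprod g x \<partial>lebesgue) = 0"
  proof (rule ccontr)
    assume "(\<integral>x. u x * pprod g x \<partial>lebesgue) \<noteq> 0"
    then have cp: "\<bar>c\<bar> > 0" unfolding c_def by simp
    define K where "K = (U + P0) / 2"
    obtain n :: nat where nK: "(K / \<bar>c\<bar>)\<^sup>2 + 1 \<le> real n" using real_arch_simple by blast
    then have n: "n > 0" by (smt (verit) of_nat_0_less_iff zero_le_power2)
    have "K / \<bar>c\<bar> < sqrt (real n)" using nK by (intro real_less_rsqrt) simp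
    then have "K < sqrt (real n) * \<bar>c\<bar>" using cp by (simp add: field_simps)
    then have "sqrt (real n) * K < sqrt (real n) * (sqrt (real n) * \<bar>c\<bar>)"
      using n by (intro mult_strict_left_mono) auto
    also have "\<dots> = real n * \<bar>c\<bar>" by (simp add: mult.assoc[symmetric])
    finally show False using bound[OF n] unfolding K_def by simp
  qed
qed

lemma grad_pos:
  fixes u :: "'a::euclidean_space \<Rightarrow> real"
  assumes u: "H1 u" and m: "L2_norm_sq u \<noteq> 0"
  shows "(\<integral>x. grad_sq u x \<partial>lebesgue) > 0"
proof (rule ccontr)
  assume "\<not> (\<integral>x. grad_sq u x \<partial>lebesgue) > 0"
  moreover have "(\<integral>x. grad_sq u x \<partial>lebesgue) \<ge> 0" using grad_sq_nonneg[of u] by simp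
  ultimately have "(\<integral>x. grad_sq u x \<partial>lebesgue) = 0" by simp
  moreover have "AE x in lebesgue. 0 \<le> grad_sq u x" by (rule AE_I2) (rule grad_sq_nonneg)
  ultimately have ae: "AE x in lebesgue. grad_sq u x = 0"
    using integral_nonneg_eq_0_iff_AE[OF grad_sq_int[OF u]] by simp
  have uL: "L2 u" using u unfolding H1_def by blast
  have Z: "(\<integral>x. u x * frechet_derivative \<phi> (at x) b \<partial>lebesgue) = 0" if t: "test_fun \<phi>" and b: "b \<in> Basis" for \<phi> b
  proof -
    have aeb: "AE x in lebesgue. weak_grad u b x = 0"
      using ae
    proof (rule eventually_mono)
      fix x assume "grad_sq u x = 0"
      moreover have "(weak_grad u b x)\<^sup>2 \<le> grad_sq u x"
        unfolding grad_sq_def by (rule member_le_sum[OF b]) auto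
      ultimately show "weak_grad u b x = 0" by simp
    qed
    have gm: "weak_grad u b \<in> borel_measurable lebesgue" using weak_grad_spec(1)[OF u b] unfolding L2_def by blast
    have "(\<integral>x. u x * frechet_derivative \<phi> (at x) b \<partial>lebesgue) = - (\<integral>x. weak_grad u b x * \<phi> x \<partial>lebesgue)"
      using weak_grad_spec(2)[OF u b] t unfolding weak_partial_def by blast
    also have "(\<integral>x. weak_grad u b x * \<phi> x \<partial>lebesgue) = (\<integral>x. (0::real) \<partial>(lebesgue::'a measure))"
    proof (rule Bochner_Integration.integral_cong_AE)
      show "(\<lambda>x. weak_grad u b x * \<phi> x) \<in> borel_measurable lebesgue"
        using gm cont_meas[OF test_cont[OF t]] by (rule borel_measurable_times)
      show "AE x in lebesgue. weak_grad u b x * \<phi> x = 0" using aeb by (rule eventually_mono) simp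
    qed simp
    finally show ?thesis by simp
  qed
  have "AE x in lebesgue. u x = 0"
  proof (rule fundamental[OF uL])
    fix g :: "'a \<Rightarrow> real \<Rightarrow> real" and R :: real
    assume "\<And>c. c \<in> Basis \<Longrightarrow> sm1 (g c)" "\<And>c y. c \<in> Basis \<Longrightarrow> R \<le> \<bar>y\<bar> \<Longrightarrow> g c y = 0"
    then show "(\<integral>x. u x * pprod g x \<partial>lebesgue) = 0" by (intro zero_grad_prod[OF uL Z]) auto
  qed
  then have "L2_norm_sq u = (\<integral>x. (0::real) \<partial>(lebesgue::'a measure))"
    unfolding L2_norm_sq_def
  proof (intro Bochner_Integration.integral_cong_AE)
    show "(\<lambda>x. (u x)\<^sup>2) \<in> borel_measurable lebesgue" using uL unfolding L2_def by (intro borel_measurable_power) blast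
  qed (auto elim: eventually_mono)
  then show False using m by simp
qed

lemma J_split:
  fixes u :: "'a::euclidean_space \<Rightarrow> real"
  assumes u: "H1 u" and Fi: "integrable lebesgue (\<lambda>x. F (u x))"
  shows "J F u = (1/2) * (\<integral>x. grad_sq u x \<partial>lebesgue) + (\<integral>x. F (u x) \<partial>lebesgue)"
proof -
  have "J F u = (\<integral>x. (1/2) * grad_sq u x \<partial>lebesgue) + (\<integral>x. F (u x) \<partial>lebesgue)"
    unfolding J_def by (rule Bochner_Integration.integral_add) (use grad_sq_int[OF u] Fi in auto)
  then show ?thesis by simp
qed

lemma J_scale:
  fixes u :: "'a::euclidean_space \<Rightarrow> real" and F :: "real \<Rightarrow> real"
  assumes u: "H1 u" and s: "s \<noteq> 0" and contF: "continuous_on UNIV F"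
    and Jd: "\<And>v::'a \<Rightarrow> real. H1 v \<Longrightarrow> integrable lebesgue (\<lambda>x. F (v x))"
  shows "J F (\<lambda>x. u (s *\<^sub>R x)) = (s\<^sup>2 * ((1/2) * (\<integral>x. grad_sq u x \<partial>lebesgue)) + (\<integral>x. F (u x) \<partial>lebesgue)) / \<bar>s\<bar> ^ DIM('a)"
proof -
  have us: "H1 (\<lambda>x. u (s *\<^sub>R x))" by (rule H1_scale[OF u s])
  have um: "u \<in> borel_measurable lebesgue" using u unfolding H1_def L2_def by blast
  have Fm: "(\<lambda>x. F (u x)) \<in> borel_measurable lebesgue"
    using measurable_compose[OF um borel_measurable_continuous_onI[OF contF]] by (simp add: o_def)
  have gm: "grad_sq u \<in> borel_measurable lebesgue" using grad_sq_int[OF u] by (rule borel_measurable_integrable)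
  have "(\<integral>x. grad_sq (\<lambda>x. u (s *\<^sub>R x)) x \<partial>lebesgue) = (\<integral>x. s\<^sup>2 * grad_sq u (s *\<^sub>R x) \<partial>lebesgue)"
  proof (rule Bochner_Integration.integral_cong_AE)
    show "grad_sq (\<lambda>x. u (s *\<^sub>R x)) \<in> borel_measurable lebesgue"
      using grad_sq_int[OF us] by (rule borel_measurable_integrable)
    show "(\<lambda>x. s\<^sup>2 * grad_sq u (s *\<^sub>R x)) \<in> borel_measurable lebesgue"
      using meas_scale[OF gm] by (rule borel_measurable_times[OF borel_measurable_const])
    show "AE x in lebesgue. grad_sq (\<lambda>x. u (s *\<^sub>R x)) x = s\<^sup>2 * grad_sq u (s *\<^sub>R x)"
      by (rule grad_sq_scale[OF u s])
  qed
  also have "\<dots> = s\<^sup>2 * ((\<integral>x. grad_sq u x \<partial>lebesgue) / \<bar>s\<bar> ^ DIM('a))"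
    using lebesgue_scale(2)[OF gm s] by simp
  finally have G: "(\<integral>x. grad_sq (\<lambda>x. u (s *\<^sub>R x)) x \<partial>lebesgue) = s\<^sup>2 * ((\<integral>x. grad_sq u x \<partial>lebesgue) / \<bar>s\<bar> ^ DIM('a))" .
  have P: "(\<integral>x. F (u (s *\<^sub>R x)) \<partial>lebesgue) = (\<integral>x. F (u x) \<partial>lebesgue) / \<bar>s\<bar> ^ DIM('a)"
    by (rule lebesgue_scale(2)[OF Fm s])
  have sn: "\<bar>s\<bar> ^ DIM('a) \<noteq> 0" using s by simp
  show ?thesis
    unfolding J_split[OF us Jd[OF us]] G P using sn by (simp add: field_simps)
qed

lemma Imin_min:
  fixes F :: "real \<Rightarrow> real" and N :: "'a::euclidean_space itself"
  assumes min_attained: "\<And>\<rho>. \<rho> > 0 \<Longrightarrow>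
           \<exists>u::'a \<Rightarrow> real. u \<in> mass_set (\<rho>\<^sup>2) \<and> (\<forall>v::'a \<Rightarrow> real \<in> mass_set (\<rho>\<^sup>2). J F u \<le> J F v)"
    and m: "m > 0"
  shows "\<exists>u::'a \<Rightarrow> real. u \<in> mass_set m \<and> Imin F m N = J F u \<and> (\<forall>v::'a \<Rightarrow> real \<in> mass_set m. Imin F m N \<le> J F v)"
proof -
  have sq: "(sqrt m)\<^sup>2 = m" using m by simp
  obtain u :: "'a \<Rightarrow> real" where u: "u \<in> mass_set m" "\<forall>v::'a \<Rightarrow> real \<in> mass_set m. J F u \<le> J F v"
    using min_attained[of "sqrt m"] m unfolding sq by auto
  have "Imin F m N = J F u"
    unfolding Imin_def by (rule cInf_eq_minimum) (use u in auto)
  then show ?thesis using u by auto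
qed

lemma scale_ineq:
  fixes F :: "real \<Rightarrow> real" and N :: "'a::euclidean_space itself"
  assumes contF: "continuous_on UNIV F"
    and Jd: "\<And>u::'a \<Rightarrow> real. H1 u \<Longrightarrow> integrable lebesgue (\<lambda>x. F (u x))"
    and min_attained: "\<And>\<rho>. \<rho> > 0 \<Longrightarrow>
           \<exists>u::'a \<Rightarrow> real. u \<in> mass_set (\<rho>\<^sup>2) \<and> (\<forall>v::'a \<Rightarrow> real \<in> mass_set (\<rho>\<^sup>2). J F u \<le> J F v)"
    and m: "m > 0" and t: "t \<ge> 1"
  shows "Imin F (t * m) N \<le> t * Imin F m N \<and> (t > 1 \<longrightarrow> Imin F (t * m) N < t * Imin F m N)"
proof -
  obtain u :: "'a \<Rightarrow> real" where u: "u \<in> mass_set m" and Iu: "Imin F m N = J F u"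
    using Imin_min[OF min_attained m, of N] by blast
  have uH: "H1 u" and um: "L2_norm_sq u = m" using u unfolding mass_set_def by auto
  have uL: "L2 u" using uH unfolding H1_def by blast
  define s where "s = root DIM('a) (inverse t)"
  have tp: "t > 0" using t by simp
  have s0: "s > 0" unfolding s_def using tp by (intro real_root_gt_zero) auto
  have sN: "\<bar>s\<bar> ^ DIM('a) = inverse t" using s0 tp unfolding s_def by simp
  have s1: "s \<le> 1" unfolding s_def using t by (simp add: inverse_le_1_iff)
  have s2: "s\<^sup>2 \<le> 1" using s0 s1 by (simp add: power_le_one)
  define v where "v = (\<lambda>x. u (s *\<^sub>R x))"
  have vH: "H1 v" unfolding v_def by (rule H1_scale[OF uH]) (use s0 in simp)
  have sne: "s \<noteq> 0" using s0 by simp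
  have vm: "L2_norm_sq v = t * m" unfolding v_def L2_scale(2)[OF uL sne] um sN using s0 tp
    by (simp add: field_simps)
  have "v \<in> mass_set (t * m)" using vH vm unfolding mass_set_def by simp
  moreover have tm: "t * m > 0" using tp m by simp
  ultimately have Iv: "Imin F (t * m) N \<le> J F v" using Imin_min[OF min_attained tm, of N] by blast
  define G where "G = (1/2) * (\<integral>x. grad_sq u x \<partial>lebesgue)"
  define P where "P = (\<integral>x. F (u x) \<partial>lebesgue)"
  have Ju: "J F u = G + P" unfolding G_def P_def by (rule J_split[OF uH Jd[OF uH]])
  have "J F v = (s\<^sup>2 * G + P) / \<bar>s\<bar> ^ DIM('a)"
    unfolding v_def G_def P_def by (rule J_scale[OF uH sne contF Jd])
  then have Jv: "J F v = t * (s\<^sup>2 * G + P)"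
    unfolding sN using tp by (simp add: field_simps)
  have Gp: "G > 0" unfolding G_def using grad_pos[OF uH] um m by simp
  have "s\<^sup>2 * G \<le> G" using s2 Gp by (simp add: mult_le_cancel_right1)
  then have le: "J F v \<le> t * J F u" unfolding Jv Ju using tp by (intro mult_left_mono) auto
  have lt: "J F v < t * J F u" if "t > 1"
  proof -
    have "s < 1" unfolding s_def using that by (simp add: inverse_less_1_iff)
    then have "s\<^sup>2 < 1" using s0 by (simp add: power_less_one_iff)
    then have "s\<^sup>2 * G < G" using Gp by (simp add: mult_less_cancel_right1)
    then show ?thesis unfolding Jv Ju using tp by (intro mult_strict_left_mono) auto
  qed
  show ?thesis using Iv le lt unfolding Iu by fastforce
qed

lemma subadd:
  fixes F :: "real \<Rightarrow> real" and N :: "'a::euclidean_space itself"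
  assumes contF: "continuous_on UNIV F"
    and Jd: "\<And>u::'a \<Rightarrow> real. H1 u \<Longrightarrow> integrable lebesgue (\<lambda>x. F (u x))"
    and min_attained: "\<And>\<rho>. \<rho> > 0 \<Longrightarrow>
           \<exists>u::'a \<Rightarrow> real. u \<in> mass_set (\<rho>\<^sup>2) \<and> (\<forall>v::'a \<Rightarrow> real \<in> mass_set (\<rho>\<^sup>2). J F u \<le> J F v)"
    and a: "a > 0" and b: "b > 0" and ab: "a \<le> b"
  shows "Imin F (a + b) N < Imin F a N + Imin F b N"
proof -
  have t1: "(a + b) / b > 1" using a b by (simp add: field_simps)
  have e1: "(a + b) / b * b = a + b" using b by simp
  have t2: "b / a \<ge> 1" using a ab by (simp add: field_simps)
  have e2: "b / a * a = b" using a by simp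
  have "Imin F (a + b) N < (a + b) / b * Imin F b N"
    using scale_ineq[OF contF Jd min_attained b, of "(a + b) / b" N] t1 unfolding e1 by auto
  also have "\<dots> = Imin F b N + a / b * Imin F b N" using b by (simp add: field_simps)
  also have "a / b * Imin F b N \<le> Imin F a N"
  proof -
    have "Imin F b N \<le> b / a * Imin F a N"
      using scale_ineq[OF contF Jd min_attained a t2, of N] unfolding e2 by auto
    then have "a / b * Imin F b N \<le> a / b * (b / a * Imin F a N)"
      using a b by (intro mult_left_mono) auto
    also have "\<dots> = Imin F a N" using a b by simp
    finally show ?thesis .
  qed
  finally show ?thesis by simp
qed

theorem proposition3:
  fixes F :: "real \<Rightarrow> real"
    and N :: "'a::euclidean_space itself"
  assumes contF: "continuous_on UNIV F"
    and evenF: "\<And>s. F (- s) = F s"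
    and J_defined: "\<And>u::'a \<Rightarrow> real. H1 u \<Longrightarrow> integrable lebesgue (\<lambda>x. F (u x))"
    and min_attained: "\<And>\<rho>. \<rho> > 0 \<Longrightarrow>
           \<exists>u::'a \<Rightarrow> real. u \<in> mass_set (\<rho>\<^sup>2) \<and> (\<forall>v::'a \<Rightarrow> real \<in> mass_set (\<rho>\<^sup>2). J F u \<le> J F v)"
    and rho: "\<rho> > 0"
    and mu: "0 < \<mu>" "\<mu> < \<rho>"
  shows "Imin F (\<rho>\<^sup>2) N < Imin F (\<mu>\<^sup>2) N + Imin F (\<rho>\<^sup>2 - \<mu>\<^sup>2) N"
proof -
  have a: "\<mu>\<^sup>2 > 0" using mu by simp
  have b: "\<rho>\<^sup>2 - \<mu>\<^sup>2 > 0" using mu by (simp add: power_strict_mono)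
  have e: "\<rho>\<^sup>2 = \<mu>\<^sup>2 + (\<rho>\<^sup>2 - \<mu>\<^sup>2)" by simp
  show ?thesis
  proof (cases "\<mu>\<^sup>2 \<le> \<rho>\<^sup>2 - \<mu>\<^sup>2")
    case True
    show ?thesis using subadd[OF contF J_defined min_attained a b True, of N] e by simp
  next
    case False
    then have "\<rho>\<^sup>2 - \<mu>\<^sup>2 \<le> \<mu>\<^sup>2" by simp
    from subadd[OF contF J_defined min_attained b a this, of N]
    have "Imin F (\<rho>\<^sup>2 - \<mu>\<^sup>2 + \<mu>\<^sup>2) N < Imin F (\<rho>\<^sup>2 - \<mu>\<^sup>2) N + Imin F (\<mu>\<^sup>2) N" .
    then show ?thesis by (simp add: add.commute)
  qed
qed

end
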